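(* Let $\langle P[(\bot_k\otimes R[x_i])⅋(x_j^\perp\otimes Q)]\mid x_i\odot x_j^\perp,\Gamma\rangle$ be a proof graph, where $x$ is an arbitrary atom or a unit, and $x^\perp$ its dual. Then $\langle P[\bot_k\otimes(R[x_i]⅋(x_j^\perp\otimes Q))]\mid x_i\odot x_j^\perp,\Gamma\rangle$ is equivalent to it.
   Context: Write ⅋ for par and $\odot$ for the cut connective. A proof graph $\langle P\mid\Gamma\rangle$ is an MLL linking tree $P$ (generated by $\mathsf1\mid a\otimes a^\perp\mid a^\perp\otimes a\mid\bot\otimes L\mid L\otimes\bot\mid L⅋L$) with a sequent $\Gamma$ (cuts $A\odot A^\perp$ allowed as roots) sharing the same leaves, such that every switching (deleting one child edge per ⅋-node; $\odot$ acts like $\otimes$) is connected and acyclic. Equivalence $\sim$ is generated by commutativity/associativity of ⅋ in the linking, commutativity of $\otimes$, $\bot_i\otimes(Q\otimes\bot_j)\sim(\bot_i\otimes Q)\otimes\bot_j$, and $Q⅋(R\otimes\bot_i)\sim(Q⅋R)\otimes\bot_i$ under the side condition that in every extended switching with respect to $\bot_i$ (switching with the edge from $\bot_i$ to its parent also removed) no node of $Q$ is connected to $\bot_i$. $P[\;],R[\;]$ are linking contexts, $Q$ a linking; indices distinguish leaf occurrences. *)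

theory Defs
  imports "HOL-Library.Multiset"
begin

datatype lit = Atom nat | NAtom nat | One | Bot

fun dlit :: "lit \<Rightarrow> lit" where
  "dlit (Atom a) = NAtom a"
| "dlit (NAtom a) = Atom a"
| "dlit One = Bot"
| "dlit Bot = One"

text \<open>A leaf occurrence is a literal together with an index distinguishing occurrences.\<close>
type_synonym leaf = "lit \<times> nat"

text \<open>Trees used both for linkings (Tens, Par) and for sequent formulas (Tens, Par, and Cut at roots).\<close>
datatype 'l tree = Leaf 'l | Tens "'l tree" "'l tree" | Par "'l tree" "'l tree" | Cut "'l tree" "'l tree"

fun leaves :: "'l tree \<Rightarrow> 'l list" where
  "leaves (Leaf l) = [l]"
| "leaves (Tens a b) = leaves a @ leaves b"
| "leaves (Par a b) = leaves a @ leaves b"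
| "leaves (Cut a b) = leaves a @ leaves b"

inductive linking :: "leaf tree \<Rightarrow> bool" where
  l_one:  "linking (Leaf (One, i))"
| l_ax1:  "linking (Tens (Leaf (Atom a, i)) (Leaf (NAtom a, j)))"
| l_ax2:  "linking (Tens (Leaf (NAtom a, i)) (Leaf (Atom a, j)))"
| l_botl: "linking L \<Longrightarrow> linking (Tens (Leaf (Bot, i)) L)"
| l_botr: "linking L \<Longrightarrow> linking (Tens L (Leaf (Bot, i)))"
| l_par:  "linking L1 \<Longrightarrow> linking L2 \<Longrightarrow> linking (Par L1 L2)"

fun cut_free :: "'l tree \<Rightarrow> bool" where
  "cut_free (Leaf l) = True"
| "cut_free (Tens a b) = (cut_free a \<and> cut_free b)"
| "cut_free (Par a b) = (cut_free a \<and> cut_free b)"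
| "cut_free (Cut a b) = False"

fun dual :: "lit tree \<Rightarrow> lit tree" where
  "dual (Leaf l) = Leaf (dlit l)"
| "dual (Tens a b) = Par (dual a) (dual b)"
| "dual (Par a b) = Tens (dual a) (dual b)"
| "dual (Cut a b) = Cut (dual a) (dual b)"

definition erase :: "leaf tree \<Rightarrow> lit tree" where
  "erase t = map_tree fst t"

definition seq_formula :: "leaf tree \<Rightarrow> bool" where
  "seq_formula A \<longleftrightarrow> cut_free A \<or>
     (\<exists>B C. A = Cut B C \<and> cut_free B \<and> cut_free C \<and> erase C = dual (erase B))"

fun pos :: "'l tree \<Rightarrow> bool list set" where
  "pos (Leaf l) = {[]}"
| "pos (Tens a b) = insert [] ((#) False ` pos a \<union> (#) True ` pos b)"
| "pos (Par a b) = insert [] ((#) False ` pos a \<union> (#) True ` pos b)"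
| "pos (Cut a b) = insert [] ((#) False ` pos a \<union> (#) True ` pos b)"

fun sub :: "'l tree \<Rightarrow> bool list \<Rightarrow> 'l tree" where
  "sub t [] = t"
| "sub (Tens a b) (c # p) = sub (if c then b else a) p"
| "sub (Par a b) (c # p) = sub (if c then b else a) p"
| "sub (Cut a b) (c # p) = sub (if c then b else a) p"
| "sub (Leaf l) (c # p) = Leaf l"

text \<open>Nodes: leaves are shared (identified by their index) between the linking and the sequent;
  inner nodes of the linking and of the k-th sequent formula are identified by position.\<close>
datatype node = LeafN nat | LinkN "bool list" | SeqN nat "bool list"

definition tnode :: "(bool list \<Rightarrow> node) \<Rightarrow> leaf tree \<Rightarrow> bool list \<Rightarrow> node" where
  "tnode mk t p = (case sub t p of Leaf l \<Rightarrow> LeafN (snd l) | _ \<Rightarrow> mk p)"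

definition is_par_at :: "'l tree \<Rightarrow> bool list \<Rightarrow> bool" where
  "is_par_at t p = (case sub t p of Par _ _ \<Rightarrow> True | _ \<Rightarrow> False)"

text \<open>A switching is given by a choice, for every (par) node, of the child edge to delete
  (False = left, True = right); it is only used at par nodes. Cut nodes act like tensor nodes.\<close>
type_synonym switching = "node \<Rightarrow> bool"

definition tnodes :: "(bool list \<Rightarrow> node) \<Rightarrow> leaf tree \<Rightarrow> node set" where
  "tnodes mk t = tnode mk t ` pos t"

definition tedges :: "(bool list \<Rightarrow> node) \<Rightarrow> leaf tree \<Rightarrow> switching \<Rightarrow> node set set" where
  "tedges mk t s = {{tnode mk t p, tnode mk t (p @ [b])} | p b.
       p @ [b] \<in> pos t \<and> \<not> (is_par_at t p \<and> s (tnode mk t p) = b)}"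

definition pg_nodes :: "leaf tree \<Rightarrow> leaf tree list \<Rightarrow> node set" where
  "pg_nodes P \<Gamma> = tnodes LinkN P \<union> (\<Union>k<length \<Gamma>. tnodes (SeqN k) (\<Gamma> ! k))"

definition sw_edges :: "leaf tree \<Rightarrow> leaf tree list \<Rightarrow> switching \<Rightarrow> node set set" where
  "sw_edges P \<Gamma> s = tedges LinkN P s \<union> (\<Union>k<length \<Gamma>. tedges (SeqN k) (\<Gamma> ! k) s)"

definition adj :: "node set set \<Rightarrow> node \<Rightarrow> node \<Rightarrow> bool" where
  "adj E u v \<longleftrightarrow> {u, v} \<in> E"

definition graph_connected :: "node set \<Rightarrow> node set set \<Rightarrow> bool" where
  "graph_connected V E \<longleftrightarrow> (\<forall>u\<in>V. \<forall>v\<in>V. (adj E)\<^sup>*\<^sup>* u v)"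

definition has_cycle :: "node set set \<Rightarrow> bool" where
  "has_cycle E \<longleftrightarrow> (\<exists>vs. length vs \<ge> 3 \<and> distinct vs \<and>
      (\<forall>i<length vs. {vs ! i, vs ! ((i + 1) mod length vs)} \<in> E))"

definition graph_acyclic :: "node set set \<Rightarrow> bool" where
  "graph_acyclic E \<longleftrightarrow> \<not> has_cycle E"

definition proof_graph :: "leaf tree \<Rightarrow> leaf tree list \<Rightarrow> bool" where
  "proof_graph P \<Gamma> \<longleftrightarrow> linking P \<and> (\<forall>A\<in>set \<Gamma>. seq_formula A)
     \<and> distinct (map snd (leaves P))
     \<and> mset (leaves P) = mset (concat (map leaves \<Gamma>))
     \<and> (\<forall>s. graph_connected (pg_nodes P \<Gamma>) (sw_edges P \<Gamma> s)
             \<and> graph_acyclic (sw_edges P \<Gamma> s))"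

datatype 'l ctx = Hole | CTensL "'l ctx" "'l tree" | CTensR "'l tree" "'l ctx"
  | CParL "'l ctx" "'l tree" | CParR "'l tree" "'l ctx"

fun fill :: "'l ctx \<Rightarrow> 'l tree \<Rightarrow> 'l tree" where
  "fill Hole t = t"
| "fill (CTensL c u) t = Tens (fill c t) u"
| "fill (CTensR u c) t = Tens u (fill c t)"
| "fill (CParL c u) t = Par (fill c t) u"
| "fill (CParR u c) t = Par u (fill c t)"

fun hpos :: "'l ctx \<Rightarrow> bool list" where
  "hpos Hole = []"
| "hpos (CTensL c u) = False # hpos c"
| "hpos (CTensR u c) = True # hpos c"
| "hpos (CParL c u) = False # hpos c"
| "hpos (CParR u c) = True # hpos c"

text \<open>Side condition for Q par (R * bot_i) ~ (Q par R) * bot_i, evaluated in the proof graph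
  P, Gamma where the redex Q par (R * bot_i) sits at position h of P: in every extended
  switching w.r.t. bot_i (the edge from bot_i to its parent in the linking also removed),
  no node of Q is connected to bot_i.\<close>
definition side_cond :: "leaf tree \<Rightarrow> leaf tree list \<Rightarrow> bool list \<Rightarrow> leaf tree \<Rightarrow> nat \<Rightarrow> bool" where
  "side_cond P \<Gamma> h Q i \<longleftrightarrow> (\<forall>s. \<forall>q\<in>pos Q.
      \<not> (adj (sw_edges P \<Gamma> s - {{tnode LinkN P (h @ [True]), LeafN i}}))\<^sup>*\<^sup>*
          (tnode LinkN P (h @ [False] @ q)) (LeafN i))"

text \<open>Local rewrite rules (one orientation each; the equivalence is their symmetric closure).\<close>
definition local_rule :: "leaf tree \<Rightarrow> leaf tree list \<Rightarrow> bool list \<Rightarrow> leaf tree \<Rightarrow> leaf tree \<Rightarrow> bool" where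
  "local_rule P \<Gamma> h A B \<longleftrightarrow>
     (\<exists>X Y. A = Par X Y \<and> B = Par Y X)
   \<or> (\<exists>X Y Z. A = Par X (Par Y Z) \<and> B = Par (Par X Y) Z)
   \<or> (\<exists>X Y. A = Tens X Y \<and> B = Tens Y X)
   \<or> (\<exists>Q i j. A = Tens (Leaf (Bot, i)) (Tens Q (Leaf (Bot, j)))
             \<and> B = Tens (Tens (Leaf (Bot, i)) Q) (Leaf (Bot, j)))
   \<or> (\<exists>Q R i. A = Par Q (Tens R (Leaf (Bot, i))) \<and> B = Tens (Par Q R) (Leaf (Bot, i))
             \<and> side_cond P \<Gamma> h Q i)"

definition pg_step :: "leaf tree list \<Rightarrow> leaf tree \<Rightarrow> leaf tree \<Rightarrow> bool" where
  "pg_step \<Gamma> P P' \<longleftrightarrow> proof_graph P \<Gamma> \<and> proof_graph P' \<Gamma> \<and>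
     (\<exists>C A B. P = fill C A \<and> P' = fill C B \<and> local_rule P \<Gamma> (hpos C) A B)"

definition pg_equiv :: "leaf tree list \<Rightarrow> leaf tree \<Rightarrow> leaf tree \<Rightarrow> bool" where
  "pg_equiv \<Gamma> P P' \<longleftrightarrow> proof_graph P \<Gamma> \<and>
     (\<lambda>X Y. pg_step \<Gamma> X Y \<or> pg_step \<Gamma> Y X)\<^sup>*\<^sup>* P P'"

end

theory Submission
  imports Defs
begin


lemma sub_fill: "sub (fill C t) (hpos C @ q) = sub t q"
  by (induction C) auto

lemma pos_fill: "(hpos C @ q \<in> pos (fill C t)) = (q \<in> pos t)"
  by (induction C) auto

fun kind :: "'l tree \<Rightarrow> 'l option \<times> nat" where
  "kind (Leaf l) = (Some l, 0)"
| "kind (Tens a b) = (None, 1)"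
| "kind (Par a b) = (None, 2)"
| "kind (Cut a b) = (None, 3)"

lemma kind_tnode: "kind (sub t p) = kind (sub t' p) \<Longrightarrow> tnode mk t p = tnode mk t' p"
  unfolding tnode_def by (cases "sub t p"; cases "sub t' p") auto

lemma kind_par: "kind (sub t p) = kind (sub t' p) \<Longrightarrow> is_par_at t p = is_par_at t' p"
  unfolding is_par_at_def by (cases "sub t p"; cases "sub t' p") auto

lemma kind_fill: "\<not> (\<exists>r. p = hpos C @ r) \<Longrightarrow> kind (sub (fill C t) p) = kind (sub (fill C t') p)"
proof (induction C arbitrary: p)
  case Hole then show ?case by auto
next
  case (CTensL c u) then show ?case by (cases p) auto
next
  case (CTensR u c) then show ?case by (cases p) auto
next
  case (CParL c u) then show ?case by (cases p) auto
next
  case (CParR u c) then show ?case by (cases p) auto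
qed

definition nonleaf :: "'l tree \<Rightarrow> bool" where "nonleaf t \<longleftrightarrow> (\<forall>l. t \<noteq> Leaf l)"

lemma nonleaf_simps[simp]: "nonleaf (Tens a b)" "nonleaf (Par a b)" "nonleaf (Cut a b)" "\<not> nonleaf (Leaf l)"
  by (auto simp: nonleaf_def)

lemma tnode_nonleaf: "nonleaf (sub t p) \<Longrightarrow> tnode mk t p = mk p"
  unfolding tnode_def nonleaf_def by (cases "sub t p") auto

lemma nonleaf_fill: "nonleaf t \<Longrightarrow> nonleaf (fill C t)"
  by (induction C) auto

lemma tnode_cons[simp]:
  "tnode mk (Tens a b) (c # q) = tnode (\<lambda>q. mk (c # q)) (if c then b else a) q"
  "tnode mk (Par a b) (c # q) = tnode (\<lambda>q. mk (c # q)) (if c then b else a) q"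
  "tnode mk (Cut a b) (c # q) = tnode (\<lambda>q. mk (c # q)) (if c then b else a) q"
  unfolding tnode_def by (auto split: tree.split)

lemma tnode_nil[simp]:
  "tnode mk (Tens a b) [] = mk []" "tnode mk (Par a b) [] = mk []" "tnode mk (Cut a b) [] = mk []"
  "tnode mk (Leaf l) p = LeafN (snd l)"
  unfolding tnode_def by (cases p; auto)+

lemma tnode_fill_same: "\<not> (\<exists>r. r \<noteq> [] \<and> p = hpos C @ r) \<Longrightarrow> nonleaf t \<Longrightarrow> nonleaf t'
   \<Longrightarrow> tnode mk (fill C t) p = tnode mk (fill C t') p"
proof (induction C arbitrary: p mk)
  case Hole then show ?case by (auto simp: tnode_nonleaf)
next
  case (CTensL c u) then show ?case by (cases p) auto
next
  case (CTensR u c) then show ?case by (cases p) auto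
next
  case (CParL c u) then show ?case by (cases p) auto
next
  case (CParR u c) then show ?case by (cases p) auto
qed


lemma is_par_cons[simp]:
  "is_par_at (Tens a b) (c # q) = is_par_at (if c then b else a) q"
  "is_par_at (Par a b) (c # q) = is_par_at (if c then b else a) q"
  "is_par_at (Cut a b) (c # q) = is_par_at (if c then b else a) q"
  "is_par_at (Tens a b) [] = False" "is_par_at (Par a b) [] = True" "is_par_at (Cut a b) [] = False"
  "is_par_at (Leaf l) p = False"
  unfolding is_par_at_def by (cases p; auto)+

lemma nil_pos[simp]: "[] \<in> pos t"
  by (cases t) auto

lemma pos_prefix: "p @ q \<in> pos t \<Longrightarrow> p \<in> pos t"
proof (induction t arbitrary: p)
  case (Leaf x) then show ?case by (cases p) auto
next
  case (Tens t1 t2) then show ?case by (cases p) auto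
next
  case (Par t1 t2) then show ?case by (cases p) auto
next
  case (Cut t1 t2) then show ?case by (cases p) auto
qed

lemma pos_same: "\<not> (\<exists>r. r \<noteq> [] \<and> p = hpos C @ r) \<Longrightarrow> (p \<in> pos (fill C t)) = (p \<in> pos (fill C t'))"
proof (induction C arbitrary: p)
  case Hole then show ?case by (cases p) auto
next
  case (CTensL c u) then show ?case by (cases p) auto
next
  case (CTensR u c) then show ?case by (cases p) auto
next
  case (CParL c u) then show ?case by (cases p) auto
next
  case (CParR u c) then show ?case by (cases p) auto
qed

lemma tnode_fill: "tnode mk (fill C t) (hpos C @ q) = tnode (\<lambda>q. mk (hpos C @ q)) t q"
  unfolding tnode_def by (simp add: sub_fill)

lemma is_par_fill: "is_par_at (fill C t) (hpos C @ q) = is_par_at t q"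
  unfolding is_par_at_def by (simp add: sub_fill)

lemma snoc_pfx: "p @ [b] = h @ r \<Longrightarrow> r \<noteq> [] \<Longrightarrow> p = h @ butlast r"
  by (metis append_butlast_last_id append_assoc butlast_append butlast_snoc)

lemma tnode_cases: "tnode mk t p = mk p \<or> (\<exists>l. tnode mk t p = LeafN l)"
  unfolding tnode_def by (auto split: tree.split)

definition D0 :: "leaf tree" where "D0 = Tens (Leaf (One,0)) (Leaf (One,0))"

definition KE :: "leaf ctx \<Rightarrow> switching \<Rightarrow> node set set" where
"KE C s = {{tnode LinkN (fill C D0) p, tnode LinkN (fill C D0) (p @ [b])} | p b.
   p @ [b] \<in> pos (fill C D0) \<and> \<not> (\<exists>r. p = hpos C @ r) \<and>
   \<not> (is_par_at (fill C D0) p \<and> s (tnode LinkN (fill C D0) p) = b)}"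

definition SE :: "leaf tree list \<Rightarrow> switching \<Rightarrow> node set set" where
  "SE G s = (\<Union>k<length G. tedges (SeqN k) (G ! k) s)"

definition KC :: "leaf ctx \<Rightarrow> leaf tree list \<Rightarrow> switching \<Rightarrow> node set set" where
  "KC C G s = KE C s \<union> SE G s"

definition NE :: "leaf ctx \<Rightarrow> node set" where
  "NE C = {tnode LinkN (fill C D0) p | p. p \<in> pos (fill C D0) \<and> \<not> (\<exists>r. p = hpos C @ r)}"

definition NC :: "leaf ctx \<Rightarrow> leaf tree list \<Rightarrow> node set" where
  "NC C G = NE C \<union> (\<Union>k<length G. tnodes (SeqN k) (G ! k))"

lemma nonleaf_D0[simp]: "nonleaf D0" by (simp add: D0_def)

lemma ctx_par:
  assumes "\<not> (\<exists>r. p = hpos C @ r)"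
  shows "tnode mk (fill C A) p = tnode mk (fill C D0) p \<and> is_par_at (fill C A) p = is_par_at (fill C D0) p
     \<and> (p \<in> pos (fill C A)) = (p \<in> pos (fill C D0))"
proof -
  have k: "kind (sub (fill C A) p) = kind (sub (fill C D0) p)" using kind_fill[OF assms] .
  have nr: "\<not> (\<exists>r. r \<noteq> [] \<and> p = hpos C @ r)" using assms by auto
  show ?thesis using kind_tnode[OF k, of mk] kind_par[OF k] pos_same[OF nr, of A D0] by simp
qed

lemma ctx_child_nr:
  assumes "\<not> (\<exists>r. p = hpos C @ r)"
  shows "\<not> (\<exists>r. r \<noteq> [] \<and> p @ [b] = hpos C @ r)"
proof
  assume "\<exists>r. r \<noteq> [] \<and> p @ [b] = hpos C @ r"
  then obtain r where r: "r \<noteq> []" "p @ [b] = hpos C @ r" by blast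
  have "p = hpos C @ butlast r" by (rule snoc_pfx[OF r(2) r(1)])
  then show False using assms(1) by blast
qed

lemma ctx_child:
  assumes "\<not> (\<exists>r. p = hpos C @ r)" "nonleaf A"
  shows "tnode mk (fill C A) (p @ [b]) = tnode mk (fill C D0) (p @ [b])
     \<and> (p @ [b] \<in> pos (fill C A)) = (p @ [b] \<in> pos (fill C D0))"
proof -
  note nr = ctx_child_nr[OF assms(1), of b]
  have 1: "tnode mk (fill C A) (p @ [b]) = tnode mk (fill C D0) (p @ [b])"
    by (rule tnode_fill_same[OF nr assms(2) nonleaf_D0])
  have 2: "(p @ [b] \<in> pos (fill C A)) = (p @ [b] \<in> pos (fill C D0))"
    by (rule pos_same[OF nr])
  show ?thesis using 1 2 by blast
qed

lemma tedges_mem: "e \<in> tedges mk t s \<longleftrightarrow> (\<exists>p b. e = {tnode mk t p, tnode mk t (p @ [b])} \<and> p @ [b] \<in> pos t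
   \<and> \<not> (is_par_at t p \<and> s (tnode mk t p) = b))"
  unfolding tedges_def by (rule mem_Collect_eq)

lemma tedgesI: "p @ [b] \<in> pos t \<Longrightarrow> \<not> (is_par_at t p \<and> s (tnode mk t p) = b)
   \<Longrightarrow> {tnode mk t p, tnode mk t (p @ [b])} \<in> tedges mk t s"
  unfolding tedges_mem by blast

lemma KE_mem: "e \<in> KE C s \<longleftrightarrow> (\<exists>p b. e = {tnode LinkN (fill C D0) p, tnode LinkN (fill C D0) (p @ [b])} \<and>
   p @ [b] \<in> pos (fill C D0) \<and> \<not> (\<exists>r. p = hpos C @ r) \<and>
   \<not> (is_par_at (fill C D0) p \<and> s (tnode LinkN (fill C D0) p) = b))"
  unfolding KE_def by (rule mem_Collect_eq)

lemma tedges_fill: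
  assumes "nonleaf A"
  shows "tedges LinkN (fill C A) s = KE C s \<union> tedges (\<lambda>q. LinkN (hpos C @ q)) A s"
proof (rule set_eqI, rule iffI)
  fix e assume "e \<in> tedges LinkN (fill C A) s"
  then obtain p b where e: "e = {tnode LinkN (fill C A) p, tnode LinkN (fill C A) (p @ [b])}"
    "p @ [b] \<in> pos (fill C A)" "\<not> (is_par_at (fill C A) p \<and> s (tnode LinkN (fill C A) p) = b)"
    unfolding tedges_mem by blast
  show "e \<in> KE C s \<union> tedges (\<lambda>q. LinkN (hpos C @ q)) A s"
  proof (cases "\<exists>r. p = hpos C @ r")
    case True
    then obtain r where r: "p = hpos C @ r" by blast
    have pb: "p @ [b] = hpos C @ (r @ [b])" using r by simp
    have 1: "r @ [b] \<in> pos A" using e(2) pos_fill[of C "r @ [b]" A] pb by simp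
    have 2: "tnode LinkN (fill C A) p = tnode (\<lambda>q. LinkN (hpos C @ q)) A r"
      using tnode_fill[of LinkN C A r] r by simp
    have 3: "tnode LinkN (fill C A) (p @ [b]) = tnode (\<lambda>q. LinkN (hpos C @ q)) A (r @ [b])"
      using tnode_fill[of LinkN C A "r @ [b]"] pb by simp
    have 4: "is_par_at (fill C A) p = is_par_at A r" using is_par_fill[of C A r] r by simp
    have "e \<in> tedges (\<lambda>q. LinkN (hpos C @ q)) A s"
      unfolding e(1) 2 3 by (rule tedgesI[OF 1]) (use e(3) 2 4 in simp)
    then show ?thesis by blast
  next
    case False
    note c1 = ctx_par[OF False, of LinkN A] and c2 = ctx_child[OF False assms, of LinkN b]
    have "e \<in> KE C s" unfolding KE_mem
      apply (rule exI[of _ p], rule exI[of _ b])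
      using e False c1 c2 by simp
    then show ?thesis by blast
  qed
next
  fix e assume "e \<in> KE C s \<union> tedges (\<lambda>q. LinkN (hpos C @ q)) A s"
  then show "e \<in> tedges LinkN (fill C A) s"
  proof
    assume "e \<in> KE C s"
    then obtain p b where e: "e = {tnode LinkN (fill C D0) p, tnode LinkN (fill C D0) (p @ [b])}"
      "p @ [b] \<in> pos (fill C D0)" "\<not> (\<exists>r. p = hpos C @ r)"
      "\<not> (is_par_at (fill C D0) p \<and> s (tnode LinkN (fill C D0) p) = b)"
      unfolding KE_mem by blast
    note c1 = ctx_par[OF e(3), of LinkN A] and c2 = ctx_child[OF e(3) assms, of LinkN b]
    show ?thesis unfolding tedges_mem
      apply (rule exI[of _ p], rule exI[of _ b])
      using e c1 c2 by simp
  next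
    assume "e \<in> tedges (\<lambda>q. LinkN (hpos C @ q)) A s"
    then obtain r b where e: "e = {tnode (\<lambda>q. LinkN (hpos C @ q)) A r, tnode (\<lambda>q. LinkN (hpos C @ q)) A (r @ [b])}"
      "r @ [b] \<in> pos A" "\<not> (is_par_at A r \<and> s (tnode (\<lambda>q. LinkN (hpos C @ q)) A r) = b)"
      unfolding tedges_mem by blast
    define p where "p = hpos C @ r"
    have pb: "p @ [b] = hpos C @ (r @ [b])" using p_def by simp
    have 1: "p @ [b] \<in> pos (fill C A)" using e(2) pos_fill[of C "r @ [b]" A] pb by simp
    have 2: "tnode LinkN (fill C A) p = tnode (\<lambda>q. LinkN (hpos C @ q)) A r"
      using tnode_fill[of LinkN C A r] p_def by simp
    have 3: "tnode LinkN (fill C A) (p @ [b]) = tnode (\<lambda>q. LinkN (hpos C @ q)) A (r @ [b])"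
      using tnode_fill[of LinkN C A "r @ [b]"] pb by simp
    have 4: "is_par_at (fill C A) p = is_par_at A r" using is_par_fill[of C A r] p_def by simp
    show ?thesis unfolding e(1) 2[symmetric] 3[symmetric]
      by (rule tedgesI[OF 1]) (use e(3) 2 4 in simp)
  qed
qed



lemma tnodes_mem: "n \<in> tnodes mk t \<longleftrightarrow> (\<exists>p\<in>pos t. n = tnode mk t p)"
  unfolding tnodes_def by blast

lemma tnodes_fill:
  assumes "nonleaf A"
  shows "tnodes LinkN (fill C A) = NE C \<union> tnodes (\<lambda>q. LinkN (hpos C @ q)) A"
proof (rule set_eqI, rule iffI)
  fix n assume "n \<in> tnodes LinkN (fill C A)"
  then obtain p where p: "p \<in> pos (fill C A)" "n = tnode LinkN (fill C A) p" unfolding tnodes_mem by blast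
  show "n \<in> NE C \<union> tnodes (\<lambda>q. LinkN (hpos C @ q)) A"
  proof (cases "\<exists>r. p = hpos C @ r")
    case True
    then obtain r where r: "p = hpos C @ r" by blast
    have "r \<in> pos A" using p(1) pos_fill[of C r A] r by simp
    moreover have "n = tnode (\<lambda>q. LinkN (hpos C @ q)) A r" using p(2) tnode_fill[of LinkN C A r] r by simp
    ultimately have "n \<in> tnodes (\<lambda>q. LinkN (hpos C @ q)) A" unfolding tnodes_mem by blast
    then show ?thesis by blast
  next
    case False
    note c1 = ctx_par[OF False, of LinkN A]
    have "n \<in> NE C" unfolding NE_def using p c1 False by auto
    then show ?thesis by blast
  qed
next
  fix n assume "n \<in> NE C \<union> tnodes (\<lambda>q. LinkN (hpos C @ q)) A"
  then show "n \<in> tnodes LinkN (fill C A)"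
  proof
    assume "n \<in> NE C"
    then obtain p where p: "n = tnode LinkN (fill C D0) p" "p \<in> pos (fill C D0)" "\<not> (\<exists>r. p = hpos C @ r)"
      unfolding NE_def by blast
    note c1 = ctx_par[OF p(3), of LinkN A]
    have "p \<in> pos (fill C A)" "n = tnode LinkN (fill C A) p" using p c1 by simp_all
    then show ?thesis unfolding tnodes_mem by blast
  next
    assume "n \<in> tnodes (\<lambda>q. LinkN (hpos C @ q)) A"
    then obtain r where r: "r \<in> pos A" "n = tnode (\<lambda>q. LinkN (hpos C @ q)) A r" unfolding tnodes_mem by blast
    have "hpos C @ r \<in> pos (fill C A)" using r(1) pos_fill by blast
    moreover have "n = tnode LinkN (fill C A) (hpos C @ r)" using r(2) tnode_fill[of LinkN C A r] by simp
    ultimately show ?thesis unfolding tnodes_mem by blast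
  qed
qed

lemma sw_edges_fill:
  "nonleaf A \<Longrightarrow> sw_edges (fill C A) G s = KC C G s \<union> tedges (\<lambda>q. LinkN (hpos C @ q)) A s"
  unfolding sw_edges_def KC_def SE_def using tedges_fill[of A C s] by auto

lemma pg_nodes_fill:
  "nonleaf A \<Longrightarrow> pg_nodes (fill C A) G = NC C G \<union> tnodes (\<lambda>q. LinkN (hpos C @ q)) A"
  unfolding pg_nodes_def NC_def using tnodes_fill[of A C] by auto

lemma tedges_nodes: "e \<in> tedges mk t s \<Longrightarrow> n \<in> e \<Longrightarrow> \<exists>p\<in>pos t. n = tnode mk t p"
proof -
  assume "e \<in> tedges mk t s" "n \<in> e"
  then obtain p b where pb: "e = {tnode mk t p, tnode mk t (p @ [b])}" "p @ [b] \<in> pos t"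
    unfolding tedges_mem by blast
  have "p \<in> pos t" using pb(2) by (rule pos_prefix)
  then show ?thesis using pb \<open>n \<in> e\<close> by blast
qed

lemma KC_nodes:
  assumes "e \<in> KC C G s" "n \<in> e"
  shows "n \<noteq> LinkN (hpos C @ c # q)"
proof
  assume n: "n = LinkN (hpos C @ c # q)"
  from assms(1) show False unfolding KC_def
  proof
    assume "e \<in> KE C s"
    then obtain p b where e: "e = {tnode LinkN (fill C D0) p, tnode LinkN (fill C D0) (p @ [b])}"
      "\<not> (\<exists>r. p = hpos C @ r)" unfolding KE_mem by blast
    have "n = tnode LinkN (fill C D0) p \<or> n = tnode LinkN (fill C D0) (p @ [b])" using e(1) assms(2) by blast
    then show False
    proof
      assume a: "n = tnode LinkN (fill C D0) p"
      have "p \<noteq> hpos C @ c # q" using e(2) by blast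
      then show False using tnode_cases[of LinkN "fill C D0" p] a n by auto
    next
      assume a: "n = tnode LinkN (fill C D0) (p @ [b])"
      then have "p @ [b] = hpos C @ c # q" using tnode_cases[of LinkN "fill C D0" "p @ [b]"] n by auto
      then have "p = hpos C @ butlast (c # q)" by (rule snoc_pfx) simp
      then show False using e(2) by blast
    qed
  next
    assume "e \<in> SE G s"
    then obtain k where "e \<in> tedges (SeqN k) (G ! k) s" unfolding SE_def by blast
    then obtain p where "n = tnode (SeqN k) (G ! k) p" using tedges_nodes assms(2) by blast
    then show False using tnode_cases[of "SeqN k" "G ! k" p] n by auto
  qed
qed

lemma NC_nodes:
  assumes "n \<in> NC C G"
  shows "n \<noteq> LinkN (hpos C @ c # q)"
proof
  assume n: "n = LinkN (hpos C @ c # q)"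
  from assms show False unfolding NC_def
  proof
    assume "n \<in> NE C"
    then obtain p where p: "n = tnode LinkN (fill C D0) p" "\<not> (\<exists>r. p = hpos C @ r)"
      unfolding NE_def by blast
    have "p \<noteq> hpos C @ c # q" using p(2) by blast
    then show False using tnode_cases[of LinkN "fill C D0" p] p n by auto
  next
    assume "n \<in> (\<Union>k<length G. tnodes (SeqN k) (G ! k))"
    then obtain k where "n \<in> tnodes (SeqN k) (G ! k)" by blast
    then obtain p where "n = tnode (SeqN k) (G ! k) p" unfolding tnodes_mem by blast
    then show False using tnode_cases[of "SeqN k" "G ! k" p] n by auto
  qed
qed

lemma par_tnode: "is_par_at t p \<Longrightarrow> tnode mk t p = mk p"
  unfolding is_par_at_def tnode_def by (auto split: tree.splits)

lemma tedges_cong: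
  assumes "\<And>p. p \<in> pos t \<Longrightarrow> s (mk p) = s' (mk p)"
  shows "tedges mk t s = tedges mk t s'"
proof -
  have H: "(is_par_at t p \<and> s (tnode mk t p) = b) = (is_par_at t p \<and> s' (tnode mk t p) = b)"
    if "p @ [b] \<in> pos t" for p b
  proof (cases "is_par_at t p")
    case True
    have "p \<in> pos t" using that by (rule pos_prefix)
    then show ?thesis using True par_tnode[OF True, of mk] assms by simp
  qed simp
  show ?thesis
  proof (rule set_eqI)
    fix e show "e \<in> tedges mk t s \<longleftrightarrow> e \<in> tedges mk t s'"
    proof
      assume "e \<in> tedges mk t s"
      then obtain p b where pb: "e = {tnode mk t p, tnode mk t (p @ [b])}" "p @ [b] \<in> pos t"
        "\<not> (is_par_at t p \<and> s (tnode mk t p) = b)" unfolding tedges_mem by blast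
      have "\<not> (is_par_at t p \<and> s' (tnode mk t p) = b)" using H[OF pb(2)] pb(3) by simp
      then show "e \<in> tedges mk t s'" unfolding pb(1) by (rule tedgesI[OF pb(2)])
    next
      assume "e \<in> tedges mk t s'"
      then obtain p b where pb: "e = {tnode mk t p, tnode mk t (p @ [b])}" "p @ [b] \<in> pos t"
        "\<not> (is_par_at t p \<and> s' (tnode mk t p) = b)" unfolding tedges_mem by blast
      have "\<not> (is_par_at t p \<and> s (tnode mk t p) = b)" using H[OF pb(2)] pb(3) by simp
      then show "e \<in> tedges mk t s" unfolding pb(1) by (rule tedgesI[OF pb(2)])
    qed
  qed
qed

lemma KE_cong:
  assumes "\<And>n. (\<forall>q. n \<noteq> LinkN (hpos C @ q)) \<Longrightarrow> s n = s' n"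
  shows "KE C s = KE C s'"
proof -
  have H: "s (tnode LinkN (fill C D0) p) = s' (tnode LinkN (fill C D0) p)" if p: "\<not> (\<exists>r. p = hpos C @ r)" for p
  proof -
    have "\<forall>q. tnode LinkN (fill C D0) p \<noteq> LinkN (hpos C @ q)"
      using tnode_cases[of LinkN "fill C D0" p] p by auto
    then show "s (tnode LinkN (fill C D0) p) = s' (tnode LinkN (fill C D0) p)" using assms by blast
  qed
  show ?thesis
  proof (rule set_eqI)
    fix e show "e \<in> KE C s \<longleftrightarrow> e \<in> KE C s'"
    proof
      assume "e \<in> KE C s"
      then obtain p b where pb: "e = {tnode LinkN (fill C D0) p, tnode LinkN (fill C D0) (p @ [b])}"
       "p @ [b] \<in> pos (fill C D0)" "\<not> (\<exists>r. p = hpos C @ r)"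
       "\<not> (is_par_at (fill C D0) p \<and> s (tnode LinkN (fill C D0) p) = b)" unfolding KE_mem by blast
      have "\<not> (is_par_at (fill C D0) p \<and> s' (tnode LinkN (fill C D0) p) = b)" using H[OF pb(3)] pb(4) by simp
      then show "e \<in> KE C s'" unfolding KE_mem using pb(1-3) by blast
    next
      assume "e \<in> KE C s'"
      then obtain p b where pb: "e = {tnode LinkN (fill C D0) p, tnode LinkN (fill C D0) (p @ [b])}"
       "p @ [b] \<in> pos (fill C D0)" "\<not> (\<exists>r. p = hpos C @ r)"
       "\<not> (is_par_at (fill C D0) p \<and> s' (tnode LinkN (fill C D0) p) = b)" unfolding KE_mem by blast
      have "\<not> (is_par_at (fill C D0) p \<and> s (tnode LinkN (fill C D0) p) = b)" using H[OF pb(3)] pb(4) by simp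
      then show "e \<in> KE C s" unfolding KE_mem using pb(1-3) by blast
    qed
  qed
qed

lemma KC_cong:
  assumes "\<And>n. (\<forall>q. n \<noteq> LinkN (hpos C @ q)) \<Longrightarrow> s n = s' n"
  shows "KC C G s = KC C G s'"
proof -
  have "\<And>k. tedges (SeqN k) (G ! k) s = tedges (SeqN k) (G ! k) s'"
    by (rule tedges_cong) (use assms in auto)
  then show ?thesis unfolding KC_def SE_def using KE_cong[OF assms] by simp
qed



lemma pos_cons[simp]:
  "(c # q \<in> pos (Tens a b)) = (q \<in> pos (if c then b else a))"
  "(c # q \<in> pos (Par a b)) = (q \<in> pos (if c then b else a))"
  "(c # q \<in> pos (Cut a b)) = (q \<in> pos (if c then b else a))"
  "(c # q \<in> pos (Leaf l)) = False"
  by (cases c; auto)+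

definition bin :: "'l tree \<Rightarrow> 'l tree \<Rightarrow> 'l tree \<Rightarrow> bool" where
  "bin T X Y \<longleftrightarrow> T = Tens X Y \<or> T = Par X Y \<or> T = Cut X Y"

lemma bin_facts:
  assumes "bin T X Y"
  shows "tnode mk T [] = mk []" "tnode mk T (c # q) = tnode (\<lambda>q. mk (c # q)) (if c then Y else X) q"
    "(c # q \<in> pos T) = (q \<in> pos (if c then Y else X))"
    "is_par_at T (c # q) = is_par_at (if c then Y else X) q"
  using assms unfolding bin_def by auto

lemma tedges_bin:
  assumes "bin T X Y"
  shows "tedges mk T s = {{mk [], tnode (\<lambda>q. mk (b # q)) (if b then Y else X) []} | b. \<not> (is_par_at T [] \<and> s (mk []) = b)}
     \<union> tedges (\<lambda>q. mk (False # q)) X s \<union> tedges (\<lambda>q. mk (True # q)) Y s"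
proof (rule set_eqI, rule iffI)
  note bf = bin_facts[OF assms]
  fix e assume "e \<in> tedges mk T s"
  then obtain p b where pb: "e = {tnode mk T p, tnode mk T (p @ [b])}" "p @ [b] \<in> pos T"
    "\<not> (is_par_at T p \<and> s (tnode mk T p) = b)" unfolding tedges_mem by blast
  show "e \<in> {{mk [], tnode (\<lambda>q. mk (b # q)) (if b then Y else X) []} | b. \<not> (is_par_at T [] \<and> s (mk []) = b)}
     \<union> tedges (\<lambda>q. mk (False # q)) X s \<union> tedges (\<lambda>q. mk (True # q)) Y s"
  proof (cases p)
    case Nil
    have "e = {mk [], tnode (\<lambda>q. mk (b # q)) (if b then Y else X) []}" using pb(1) Nil bf(1) bf(2)[of mk b "[]"] by simp
    moreover have "\<not> (is_par_at T [] \<and> s (mk []) = b)" using pb(3) Nil bf(1) by simp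
    ultimately show ?thesis by blast
  next
    case (Cons c p')
    have "{tnode (\<lambda>q. mk (c # q)) (if c then Y else X) p', tnode (\<lambda>q. mk (c # q)) (if c then Y else X) (p' @ [b])}
        \<in> tedges (\<lambda>q. mk (c # q)) (if c then Y else X) s"
      apply (rule tedgesI)
      using pb(2,3) Cons bf(2)[of mk c p'] bf(3)[of c "p' @ [b]"] bf(4)[of c p'] by simp_all
    moreover have "e = {tnode (\<lambda>q. mk (c # q)) (if c then Y else X) p', tnode (\<lambda>q. mk (c # q)) (if c then Y else X) (p' @ [b])}"
      using pb(1) Cons bf(2)[of mk c p'] bf(2)[of mk c "p' @ [b]"] by simp
    ultimately show ?thesis by (cases c) simp_all
  qed
next
  note bf = bin_facts[OF assms]
  fix e assume "e \<in> {{mk [], tnode (\<lambda>q. mk (b # q)) (if b then Y else X) []} | b. \<not> (is_par_at T [] \<and> s (mk []) = b)}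
     \<union> tedges (\<lambda>q. mk (False # q)) X s \<union> tedges (\<lambda>q. mk (True # q)) Y s"
  then have "(\<exists>b. e = {mk [], tnode (\<lambda>q. mk (b # q)) (if b then Y else X) []} \<and> \<not> (is_par_at T [] \<and> s (mk []) = b))
    \<or> (\<exists>c. e \<in> tedges (\<lambda>q. mk (c # q)) (if c then Y else X) s)"
  proof (elim UnE)
    assume "e \<in> tedges (\<lambda>q. mk (False # q)) X s"
    then have "e \<in> tedges (\<lambda>q. mk (False # q)) (if False then Y else X) s" by simp
    then show ?thesis by blast
  next
    assume "e \<in> tedges (\<lambda>q. mk (True # q)) Y s"
    then have "e \<in> tedges (\<lambda>q. mk (True # q)) (if True then Y else X) s" by simp
    then show ?thesis by blast
  qed blast
  then show "e \<in> tedges mk T s"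
  proof (elim disjE exE conjE)
    fix b assume r: "e = {mk [], tnode (\<lambda>q. mk (b # q)) (if b then Y else X) []}" "\<not> (is_par_at T [] \<and> s (mk []) = b)"
    have "{tnode mk T [], tnode mk T ([] @ [b])} \<in> tedges mk T s"
      apply (rule tedgesI) using r(2) bf(1) bf(3)[of b "[]"] by simp_all
    then show ?thesis using r(1) bf(1) bf(2)[of mk b "[]"] by simp
  next
    fix c assume "e \<in> tedges (\<lambda>q. mk (c # q)) (if c then Y else X) s"
    then obtain p b where pb: "e = {tnode (\<lambda>q. mk (c # q)) (if c then Y else X) p, tnode (\<lambda>q. mk (c # q)) (if c then Y else X) (p @ [b])}"
      "p @ [b] \<in> pos (if c then Y else X)" "\<not> (is_par_at (if c then Y else X) p \<and> s (tnode (\<lambda>q. mk (c # q)) (if c then Y else X) p) = b)"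
      unfolding tedges_mem by blast
    have "{tnode mk T (c # p), tnode mk T ((c # p) @ [b])} \<in> tedges mk T s"
      apply (rule tedgesI) using pb(2,3) bf(2)[of mk c p] bf(3)[of c "p @ [b]"] bf(4)[of c p] by simp_all
    then show ?thesis using pb(1) bf(2)[of mk c p] bf(2)[of mk c "p @ [b]"] by simp
  qed
qed

lemma tedges_Tens: "tedges mk (Tens X Y) s = {{mk [], tnode (\<lambda>q. mk (False # q)) X []}, {mk [], tnode (\<lambda>q. mk (True # q)) Y []}}
     \<union> tedges (\<lambda>q. mk (False # q)) X s \<union> tedges (\<lambda>q. mk (True # q)) Y s"
proof -
  have "{{mk [], tnode (\<lambda>q. mk (b # q)) (if b then Y else X) []} | b. \<not> (is_par_at (Tens X Y) [] \<and> s (mk []) = b)}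
     = {{mk [], tnode (\<lambda>q. mk (False # q)) X []}, {mk [], tnode (\<lambda>q. mk (True # q)) Y []}}"
    by auto
  then show ?thesis using tedges_bin[of "Tens X Y" X Y mk s] by (simp add: bin_def)
qed

lemma tedges_Cut: "tedges mk (Cut X Y) s = {{mk [], tnode (\<lambda>q. mk (False # q)) X []}, {mk [], tnode (\<lambda>q. mk (True # q)) Y []}}
     \<union> tedges (\<lambda>q. mk (False # q)) X s \<union> tedges (\<lambda>q. mk (True # q)) Y s"
proof -
  have "{{mk [], tnode (\<lambda>q. mk (b # q)) (if b then Y else X) []} | b. \<not> (is_par_at (Cut X Y) [] \<and> s (mk []) = b)}
     = {{mk [], tnode (\<lambda>q. mk (False # q)) X []}, {mk [], tnode (\<lambda>q. mk (True # q)) Y []}}"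
    by auto
  then show ?thesis using tedges_bin[of "Cut X Y" X Y mk s] by (simp add: bin_def)
qed

lemma tedges_Par: "tedges mk (Par X Y) s = (if s (mk []) then {{mk [], tnode (\<lambda>q. mk (False # q)) X []}}
       else {{mk [], tnode (\<lambda>q. mk (True # q)) Y []}})
     \<union> tedges (\<lambda>q. mk (False # q)) X s \<union> tedges (\<lambda>q. mk (True # q)) Y s"
proof -
  have "{{mk [], tnode (\<lambda>q. mk (b # q)) (if b then Y else X) []} | b. \<not> (is_par_at (Par X Y) [] \<and> s (mk []) = b)}
     = (if s (mk []) then {{mk [], tnode (\<lambda>q. mk (False # q)) X []}}
       else {{mk [], tnode (\<lambda>q. mk (True # q)) Y []}})"
    by auto
  then show ?thesis using tedges_bin[of "Par X Y" X Y mk s] by (simp add: bin_def)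
qed

lemma tedges_Leaf: "tedges mk (Leaf l) s = {}"
  unfolding tedges_def by auto

lemma tnodes_bin:
  assumes "bin T X Y"
  shows "tnodes mk T = insert (mk []) (tnodes (\<lambda>q. mk (False # q)) X \<union> tnodes (\<lambda>q. mk (True # q)) Y)"
proof -
  have "pos T = insert [] ((#) False ` pos X \<union> (#) True ` pos Y)" using assms unfolding bin_def by auto
  then show ?thesis unfolding tnodes_def by (simp add: image_Un image_image bin_facts[OF assms])
qed

lemma tnodes_simps:
  "tnodes mk (Tens X Y) = insert (mk []) (tnodes (\<lambda>q. mk (False # q)) X \<union> tnodes (\<lambda>q. mk (True # q)) Y)"
  "tnodes mk (Par X Y) = insert (mk []) (tnodes (\<lambda>q. mk (False # q)) X \<union> tnodes (\<lambda>q. mk (True # q)) Y)"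
  "tnodes mk (Cut X Y) = insert (mk []) (tnodes (\<lambda>q. mk (False # q)) X \<union> tnodes (\<lambda>q. mk (True # q)) Y)"
  "tnodes mk (Leaf l) = {LeafN (snd l)}"
  using tnodes_bin[of "Tens X Y" X Y mk] tnodes_bin[of "Par X Y" X Y mk] tnodes_bin[of "Cut X Y" X Y mk]
  by (simp_all add: bin_def tnodes_def)

lemma tnode_map: "(\<And>l. F (LeafN l) = LeafN l) \<Longrightarrow> tnode (\<lambda>q. F (mk q)) t p = F (tnode mk t p)"
  unfolding tnode_def by (auto split: tree.split)

lemma tedges_map:
  assumes "\<And>l. F (LeafN l) = LeafN l"
  shows "tedges (\<lambda>q. F (mk q)) t s = (`) F ` tedges mk t (\<lambda>n. s (F n))"
proof (rule set_eqI, rule iffI)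
  note tm = tnode_map[of F, OF assms]
  fix e assume "e \<in> tedges (\<lambda>q. F (mk q)) t s"
  then obtain p b where pb: "e = {tnode (\<lambda>q. F (mk q)) t p, tnode (\<lambda>q. F (mk q)) t (p @ [b])}" "p @ [b] \<in> pos t"
    "\<not> (is_par_at t p \<and> s (tnode (\<lambda>q. F (mk q)) t p) = b)" unfolding tedges_mem by blast
  have "{tnode mk t p, tnode mk t (p @ [b])} \<in> tedges mk t (\<lambda>n. s (F n))"
    apply (rule tedgesI) using pb(2,3) tm by simp_all
  moreover have "e = F ` {tnode mk t p, tnode mk t (p @ [b])}" using pb(1) tm by simp
  ultimately show "e \<in> (`) F ` tedges mk t (\<lambda>n. s (F n))" by blast
next
  note tm = tnode_map[of F, OF assms]
  fix e assume "e \<in> (`) F ` tedges mk t (\<lambda>n. s (F n))"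
  then obtain e' where e': "e' \<in> tedges mk t (\<lambda>n. s (F n))" "e = F ` e'" by blast
  then obtain p b where pb: "e' = {tnode mk t p, tnode mk t (p @ [b])}" "p @ [b] \<in> pos t"
    "\<not> (is_par_at t p \<and> s (F (tnode mk t p)) = b)" unfolding tedges_mem by blast
  have "{tnode (\<lambda>q. F (mk q)) t p, tnode (\<lambda>q. F (mk q)) t (p @ [b])} \<in> tedges (\<lambda>q. F (mk q)) t s"
    apply (rule tedgesI) using pb(2,3) tm by simp_all
  then show "e \<in> tedges (\<lambda>q. F (mk q)) t s" using e'(2) pb(1) tm by simp
qed

lemma tnodes_map: "(\<And>l. F (LeafN l) = LeafN l) \<Longrightarrow> tnodes (\<lambda>q. F (mk q)) t = F ` tnodes mk t"
  unfolding tnodes_def using tnode_map[of F mk t] by (simp add: image_image)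



lemma adj_sym: "adj E u v = adj E v u"
  by (simp add: adj_def insert_commute)

lemma rtr_sym: "(adj E)\<^sup>*\<^sup>* u v \<Longrightarrow> (adj E)\<^sup>*\<^sup>* v u"
proof (induction rule: rtranclp_induct)
  case base then show ?case by simp
next
  case (step y z)
  have "adj E z y" using step(2) adj_sym by metis
  then show ?case using step(3) by (rule converse_rtranclp_into_rtranclp)
qed

lemma rtr_mono: "E \<subseteq> E' \<Longrightarrow> (adj E)\<^sup>*\<^sup>* u v \<Longrightarrow> (adj E')\<^sup>*\<^sup>* u v"
proof -
  assume "E \<subseteq> E'" "(adj E)\<^sup>*\<^sup>* u v"
  moreover have "\<And>a b. adj E a b \<Longrightarrow> adj E' a b" using \<open>E \<subseteq> E'\<close> by (auto simp: adj_def)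
  ultimately show ?thesis by (metis rtranclp_mono predicate2I predicate2D)
qed

lemma rtr_edge: "{u, v} \<in> E \<Longrightarrow> (adj E)\<^sup>*\<^sup>* u v"
  by (rule r_into_rtranclp) (simp add: adj_def)

lemma has_cycle_mono: "has_cycle E \<Longrightarrow> E \<subseteq> E' \<Longrightarrow> has_cycle E'"
  unfolding has_cycle_def by blast

lemma conn_map:
  assumes "graph_connected V E"
  shows "graph_connected (F ` V) ((`) F ` E)"
proof -
  have "(adj ((`) F ` E))\<^sup>*\<^sup>* (F x) (F y)" if "(adj E)\<^sup>*\<^sup>* x y" for x y
    using that
  proof (induction rule: rtranclp_induct)
    case base then show ?case by simp
  next
    case (step y z)
    have "{y, z} \<in> E" using step(2) unfolding adj_def .
    then have "F ` {y, z} \<in> (`) F ` E" by (rule imageI)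
    then have "{F y, F z} \<in> (`) F ` E" by simp
    then have "adj ((`) F ` E) (F y) (F z)" by (simp add: adj_def)
    then show ?case using step(3) by simp
  qed
  then show ?thesis using assms unfolding graph_connected_def by blast
qed

lemma cyc_map:
  assumes "inj F" "has_cycle ((`) F ` E)"
  shows "has_cycle E"
proof -
  obtain vs where vs: "length vs \<ge> 3" "distinct vs"
    "\<forall>i<length vs. {vs ! i, vs ! ((i + 1) mod length vs)} \<in> (`) F ` E"
    using assms(2) unfolding has_cycle_def by blast
  have rng: "x \<in> range F" if "x \<in> set vs" for x
  proof -
    have "\<exists>i<length vs. vs ! i = x" using that by (simp add: in_set_conv_nth)
    then obtain i where i: "i < length vs" "x = vs ! i" by blast
    have "{vs ! i, vs ! ((i + 1) mod length vs)} \<in> (`) F ` E" using vs(3) i(1) by blast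
    then obtain e where e: "e \<in> E" "{vs ! i, vs ! ((i + 1) mod length vs)} = F ` e" by (rule imageE) simp
    have "vs ! i \<in> F ` e" unfolding e(2)[symmetric] by simp
    then obtain y where "vs ! i = F y" by (rule imageE) simp
    then show ?thesis using i by simp
  qed
  define ws where "ws = map (inv F) vs"
  have Fw: "F (ws ! i) = vs ! i" if "i < length vs" for i
    using that rng[of "vs ! i"] unfolding ws_def by (simp add: f_inv_into_f)
  have "length ws \<ge> 3" using vs(1) ws_def by simp
  moreover have "distinct ws" unfolding ws_def using vs(2)
    by (metis distinct_map inj_on_inv_into rng subsetI)
  moreover have "\<forall>i<length ws. {ws ! i, ws ! ((i + 1) mod length ws)} \<in> E"
  proof (intro allI impI)
    fix i assume i: "i < length ws"
    then have i': "i < length vs" by (simp add: ws_def)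
    have "length vs > 0" using i' by linarith
    then have j: "(i + 1) mod length vs < length vs" by simp
    have "{vs ! i, vs ! ((i + 1) mod length vs)} \<in> (`) F ` E" using vs(3) i' by blast
    then obtain e where e: "e \<in> E" "{vs ! i, vs ! ((i + 1) mod length vs)} = F ` e" by (rule imageE) simp
    have "F ` {ws ! i, ws ! ((i + 1) mod length ws)} = F ` e" using e(2) Fw[OF i'] Fw[OF j] by (simp add: ws_def)
    then have "{ws ! i, ws ! ((i + 1) mod length ws)} = e" by (simp only: inj_image_eq_iff[OF assms(1)])
    then show "{ws ! i, ws ! ((i + 1) mod length ws)} \<in> E" using e(1) by simp
  qed
  ultimately show ?thesis unfolding has_cycle_def by blast
qed

fun epath :: "node set set \<Rightarrow> node list \<Rightarrow> bool" where
  "epath E [] = True"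
| "epath E [x] = True"
| "epath E (x # y # r) = ({x, y} \<in> E \<and> epath E (y # r))"

lemma epath_nth: "epath E vs \<longleftrightarrow> (\<forall>i. Suc i < length vs \<longrightarrow> {vs ! i, vs ! Suc i} \<in> E)"
proof (induction E vs rule: epath.induct)
  case (3 E x y r)
  show ?case
  proof
    assume "epath E (x # y # r)"
    then show "\<forall>i. Suc i < length (x # y # r) \<longrightarrow> {(x # y # r) ! i, (x # y # r) ! Suc i} \<in> E"
      using 3 by (auto simp: nth_Cons split: nat.split)
  next
    assume a: "\<forall>i. Suc i < length (x # y # r) \<longrightarrow> {(x # y # r) ! i, (x # y # r) ! Suc i} \<in> E"
    have "{x, y} \<in> E" using a[rule_format, of 0] by simp
    moreover have "\<forall>i. Suc i < length (y # r) \<longrightarrow> {(y # r) ! i, (y # r) ! Suc i} \<in> E"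
      using a by (metis Suc_less_eq length_Cons nth_Cons_Suc)
    ultimately show "epath E (x # y # r)" using 3 by simp
  qed
qed auto

lemma epath_append: "epath E (xs @ ys) \<longleftrightarrow> epath E xs \<and> epath E ys \<and> (xs \<noteq> [] \<longrightarrow> ys \<noteq> [] \<longrightarrow> {last xs, hd ys} \<in> E)"
proof (induction E xs rule: epath.induct)
  case (2 E x) then show ?case by (cases ys) auto
qed auto

lemma epath_Cons: "epath E (x # xs) \<longleftrightarrow> epath E xs \<and> (xs \<noteq> [] \<longrightarrow> {x, hd xs} \<in> E)"
  by (cases xs) auto

lemma epath_rev: "epath E (rev xs) = epath E xs"
proof (induction E xs rule: epath.induct)
  case (3 E x y r)
  have "epath E (rev (x # y # r)) = epath E (rev (y # r) @ [x])" by simp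
  also have "\<dots> = (epath E (rev (y # r)) \<and> {y, x} \<in> E)" by (subst epath_append) simp
  also have "\<dots> = epath E (x # y # r)" using 3 by (auto simp: insert_commute)
  finally show ?case .
qed auto

lemma epath_mono: "epath E vs \<Longrightarrow> E \<subseteq> E' \<Longrightarrow> epath E' vs"
  by (induction E vs rule: epath.induct) auto

lemma epath_rtr: "epath E vs \<Longrightarrow> vs \<noteq> [] \<Longrightarrow> (adj E)\<^sup>*\<^sup>* (hd vs) (last vs)"
proof (induction E vs rule: epath.induct)
  case (3 E x y r)
  have "adj E x y" using 3(2) by (simp add: adj_def)
  moreover have "(adj E)\<^sup>*\<^sup>* y (last (y # r))" using 3 by simp
  ultimately show ?case by (simp add: converse_rtranclp_into_rtranclp)
qed auto

lemma rtr_path: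
  assumes "(adj E)\<^sup>*\<^sup>* u v"
  shows "\<exists>vs. epath E vs \<and> distinct vs \<and> vs \<noteq> [] \<and> hd vs = u \<and> last vs = v"
  using assms
proof (induction rule: converse_rtranclp_induct)
  case base
  show ?case by (rule exI[of _ "[v]"]) simp
next
  case (step u y)
  obtain vs where vs: "epath E vs" "distinct vs" "vs \<noteq> []" "hd vs = y" "last vs = v" using step(3) by blast
  show ?case
  proof (cases "u \<in> set vs")
    case True
    then obtain xs ys where xy: "vs = xs @ u # ys" by (metis split_list)
    have "epath E (u # ys)" using vs(1) xy epath_append by blast
    moreover have "distinct (u # ys)" using vs(2) xy by simp
    moreover have "last (u # ys) = v" using vs(5) xy by simp
    ultimately show ?thesis by (intro exI[of _ "u # ys"]) simp
  next
    case False
    have "{u, y} \<in> E" using step(1) by (simp add: adj_def)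
    then have "epath E (u # vs)" using vs epath_Cons by blast
    moreover have "distinct (u # vs)" using vs(2) False by simp
    moreover have "last (u # vs) = v" using vs(3,5) by simp
    ultimately show ?thesis by (intro exI[of _ "u # vs"]) simp
  qed
qed

lemma cycle_of_path:
  assumes "epath E vs" "distinct vs" "length vs \<ge> 3" "{last vs, hd vs} \<in> E"
  shows "has_cycle E"
  unfolding has_cycle_def
proof (intro exI[of _ vs] conjI allI impI)
  fix i assume i: "i < length vs"
  show "{vs ! i, vs ! ((i + 1) mod length vs)} \<in> E"
  proof (cases "Suc i < length vs")
    case True
    then show ?thesis using assms(1) epath_nth by simp
  next
    case False
    then have "i = length vs - 1" using i by simp
    moreover have "vs \<noteq> []" using assms(3) by auto
    ultimately have "vs ! i = last vs" "(i + 1) mod length vs = 0" by (simp_all add: last_conv_nth)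
    moreover have "vs ! 0 = hd vs" using \<open>vs \<noteq> []\<close> by (simp add: hd_conv_nth)
    ultimately show ?thesis using assms(4) by simp
  qed
qed (use assms in auto)

lemma cycle_insert:
  assumes "has_cycle (insert {u, v} E)"
  shows "has_cycle E \<or> (adj E)\<^sup>*\<^sup>* u v"
proof -
  obtain vs where vs: "length vs \<ge> 3" "distinct vs"
    "\<forall>i<length vs. {vs ! i, vs ! ((i + 1) mod length vs)} \<in> insert {u, v} E"
    using assms unfolding has_cycle_def by blast
  define n where "n = length vs"
  show ?thesis
  proof (cases "\<forall>i<length vs. {vs ! i, vs ! ((i + 1) mod length vs)} \<in> E")
    case True
    then have "has_cycle E" unfolding has_cycle_def using vs(1,2) by blast
    then show ?thesis by blast
  next
    case False
    then obtain i where i: "i < n" "{vs ! i, vs ! ((i + 1) mod n)} = {u, v}" using vs(3) n_def by blast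
    define ws where "ws = rotate (Suc i) vs"
    have lw: "length ws = n" using ws_def n_def by simp
    have dw: "distinct ws" using ws_def vs(2) by simp
    have n3: "n \<ge> 3" using vs(1) n_def by simp
    have wn: "ws ! j = vs ! ((j + Suc i) mod n)" if "j < n" for j
    proof -
      have "rotate (Suc i) vs ! j = vs ! ((Suc i + j) mod length vs)" by (rule nth_rotate) (use that n_def in simp)
      then show ?thesis unfolding ws_def n_def by (simp add: add.commute)
    qed
    have A: "{ws ! j, ws ! Suc j} \<in> insert {u, v} E" if j: "Suc j < n" for j
    proof -
      define k where "k = (j + Suc i) mod n"
      have kn: "k < n" using n3 k_def by simp
      have "(Suc j + Suc i) mod n = (k + 1) mod n" unfolding k_def by (simp add: mod_Suc_eq)
      then have "ws ! Suc j = vs ! ((k + 1) mod n)" using wn[OF j] by simp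
      moreover have "ws ! j = vs ! k" using wn[of j] j k_def by simp
      ultimately show ?thesis using vs(3) kn n_def by simp
    qed
    have B1: "ws ! (n - 1) = vs ! i"
    proof -
      have "(n - 1 + Suc i) mod n = i" using i(1) n3 by (simp add: mod_if)
      then show ?thesis using wn[of "n - 1"] n3 by simp
    qed
    have B2: "ws ! 0 = vs ! ((i + 1) mod n)" using wn[of 0] n3 by simp
    have f: "{ws ! (n - 1), ws ! 0} = {u, v}" using B1 B2 i(2) by simp
    have C: "{ws ! j, ws ! Suc j} \<noteq> {u, v}" if j: "Suc j < n" for j
    proof
      assume eq: "{ws ! j, ws ! Suc j} = {u, v}"
      then have eq2: "{ws ! j, ws ! Suc j} = {ws ! (n - 1), ws ! 0}" using f by simp
      have "ws ! j \<in> {ws ! j, ws ! Suc j}" by simp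
      then have "ws ! j \<in> {ws ! (n - 1), ws ! 0}" by (simp only: eq2)
      then have "ws ! j = ws ! (n - 1) \<or> ws ! j = ws ! 0" by simp
      then show False
      proof
        assume "ws ! j = ws ! (n - 1)"
        then have "j = n - 1" using dw lw j by (simp add: nth_eq_iff_index_eq)
        then show False using j by simp
      next
        assume "ws ! j = ws ! 0"
        then have j0: "j = 0" using dw lw j by (simp add: nth_eq_iff_index_eq)
        have "ws ! Suc j \<in> {ws ! j, ws ! Suc j}" by simp
        then have "ws ! Suc j \<in> {ws ! (n - 1), ws ! 0}" by (simp only: eq2)
        then have "ws ! Suc j = ws ! (n - 1) \<or> ws ! Suc j = ws ! 0" by simp
        then show False
        proof
          assume "ws ! Suc j = ws ! (n - 1)"
          then have "Suc j = n - 1" using dw lw j by (simp add: nth_eq_iff_index_eq)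
          then show False using j0 n3 by simp
        next
          assume "ws ! Suc j = ws ! 0"
          then have "Suc j = 0" using dw lw j by (simp add: nth_eq_iff_index_eq)
          then show False by simp
        qed
      qed
    qed
    have "epath E ws" unfolding epath_nth using A C lw by blast
    moreover have "ws \<noteq> []" using lw n3 by auto
    ultimately have "(adj E)\<^sup>*\<^sup>* (hd ws) (last ws)" by (rule epath_rtr)
    moreover have "hd ws = ws ! 0" "last ws = ws ! (n - 1)" using \<open>ws \<noteq> []\<close> lw by (simp_all add: hd_conv_nth last_conv_nth)
    ultimately have r: "(adj E)\<^sup>*\<^sup>* (ws ! 0) (ws ! (n - 1))" by simp
    have "(u = ws ! (n - 1) \<and> v = ws ! 0) \<or> (u = ws ! 0 \<and> v = ws ! (n - 1))" using f by (metis doubleton_eq_iff)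
    then show ?thesis using r rtr_sym by blast
  qed
qed

lemma tree_edge_disc:
  assumes "graph_acyclic G" "{x, y} \<in> G" "x \<noteq> y"
  shows "\<not> (adj (G - {{x, y}}))\<^sup>*\<^sup>* x y"
proof
  assume "(adj (G - {{x, y}}))\<^sup>*\<^sup>* x y"
  then obtain vs where vs: "epath (G - {{x, y}}) vs" "distinct vs" "vs \<noteq> []" "hd vs = x" "last vs = y"
    using rtr_path by blast
  obtain a b rest where abr: "vs = a # b # rest"
    using vs(3,4,5) assms(3) by (metis last_ConsL list.exhaust_sel)
  show False
  proof (cases rest)
    case Nil
    then have "{x, y} \<in> G - {{x, y}}" using vs(1,4,5) abr by simp
    then show False by simp
  next
    case (Cons c r)
    have "length vs \<ge> 3" using abr Cons by simp
    moreover have "epath G vs" using vs(1) epath_mono by blast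
    moreover have "{last vs, hd vs} \<in> G" using vs(4,5) assms(2) by (simp add: insert_commute)
    ultimately have "has_cycle G" using vs(2) cycle_of_path by blast
    then show False using assms(1) unfolding graph_acyclic_def by blast
  qed
qed

lemma two_comp:
  assumes "graph_connected V G" "x \<in> V" "w \<in> V" "{x, y} \<in> G"
  shows "(adj (G - {{x, y}}))\<^sup>*\<^sup>* x w \<or> (adj (G - {{x, y}}))\<^sup>*\<^sup>* y w"
proof -
  have "(adj G)\<^sup>*\<^sup>* x w" using assms unfolding graph_connected_def by blast
  then show ?thesis
  proof (induction rule: rtranclp_induct)
    case base then show ?case by simp
  next
    case (step a b)
    show ?case
    proof (cases "{a, b} = {x, y}")
      case True
      then have "b = x \<or> b = y" by (metis doubleton_eq_iff)
      then show ?thesis by auto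
    next
      case False
      then have "adj (G - {{x, y}}) a b" using step(2) by (simp add: adj_def)
      then show ?thesis using step(3) by (meson rtranclp.rtrancl_into_rtrancl)
    qed
  qed
qed

definition tree :: "node set \<Rightarrow> node set set \<Rightarrow> bool" where
  "tree V G \<longleftrightarrow> graph_connected V G \<and> graph_acyclic G"

lemma exchange:
  assumes "tree V G" "{x, y} \<in> G" "x \<noteq> y" "x \<in> V"
    "(adj (G - {{x, y}}))\<^sup>*\<^sup>* x u" "(adj (G - {{x, y}}))\<^sup>*\<^sup>* y v"
  shows "tree V (insert {u, v} (G - {{x, y}}))"
proof -
  let ?H = "G - {{x, y}}" and ?G' = "insert {u, v} (G - {{x, y}})"
  have sub: "?H \<subseteq> ?G'" by blast
  have xy: "(adj ?G')\<^sup>*\<^sup>* x y"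
  proof -
    have "(adj ?G')\<^sup>*\<^sup>* x u" using rtr_mono[OF sub assms(5)] .
    moreover have "(adj ?G')\<^sup>*\<^sup>* u v" by (rule rtr_edge) simp
    moreover have "(adj ?G')\<^sup>*\<^sup>* v y" using rtr_sym[OF rtr_mono[OF sub assms(6)]] .
    ultimately show ?thesis by (meson rtranclp_trans)
  qed
  have comp: "(adj ?G')\<^sup>*\<^sup>* x w" if "w \<in> V" for w
  proof -
    have "(adj ?H)\<^sup>*\<^sup>* x w \<or> (adj ?H)\<^sup>*\<^sup>* y w"
      using two_comp[of V G x w y] assms(1,2,4) that unfolding tree_def by blast
    then show ?thesis
    proof
      assume "(adj ?H)\<^sup>*\<^sup>* x w" then show ?thesis using rtr_mono[OF sub] by blast
    next
      assume "(adj ?H)\<^sup>*\<^sup>* y w" then have "(adj ?G')\<^sup>*\<^sup>* y w" using rtr_mono[OF sub] by blast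
      then show ?thesis using xy by (meson rtranclp_trans)
    qed
  qed
  have conn: "graph_connected V ?G'" unfolding graph_connected_def
  proof (intro ballI)
    fix a b assume "a \<in> V" "b \<in> V"
    then show "(adj ?G')\<^sup>*\<^sup>* a b" using comp rtr_sym by (meson rtranclp_trans)
  qed
  have acy: "graph_acyclic ?G'"
  proof -
    have acG: "graph_acyclic G" using assms(1) tree_def by blast
    have "\<not> has_cycle ?H" using acG has_cycle_mono[of ?H G] unfolding graph_acyclic_def by blast
    moreover have "\<not> (adj ?H)\<^sup>*\<^sup>* u v"
    proof
      assume "(adj ?H)\<^sup>*\<^sup>* u v"
      then have "(adj ?H)\<^sup>*\<^sup>* x y" using assms(5) rtr_sym[OF assms(6)] by (meson rtranclp_trans)
      then show False using tree_edge_disc[OF acG assms(2,3)] by blast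
    qed
    ultimately show ?thesis unfolding graph_acyclic_def using cycle_insert by blast
  qed
  show ?thesis using conn acy tree_def by blast
qed



fun lpre :: "'l ctx \<Rightarrow> 'l list" where
  "lpre Hole = []"
| "lpre (CTensL c u) = lpre c"
| "lpre (CTensR u c) = leaves u @ lpre c"
| "lpre (CParL c u) = lpre c"
| "lpre (CParR u c) = leaves u @ lpre c"

fun lpost :: "'l ctx \<Rightarrow> 'l list" where
  "lpost Hole = []"
| "lpost (CTensL c u) = lpost c @ leaves u"
| "lpost (CTensR u c) = lpost c"
| "lpost (CParL c u) = lpost c @ leaves u"
| "lpost (CParR u c) = lpost c"

lemma leaves_fill: "leaves (fill C t) = lpre C @ leaves t @ lpost C"
  by (induction C) auto

lemma mset_leaves_fill: "mset (leaves t) = mset (leaves t') \<Longrightarrow> mset (leaves (fill C t)) = mset (leaves (fill C t'))"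
  by (simp add: leaves_fill)

lemma linking_Tens_invL: "linking (Tens a b) \<Longrightarrow> nonleaf a \<Longrightarrow> linking a \<and> (\<exists>i. b = Leaf (Bot, i))"
  by (erule linking.cases) auto

lemma linking_Tens_invR: "linking (Tens a b) \<Longrightarrow> nonleaf b \<Longrightarrow> linking b \<and> (\<exists>i. a = Leaf (Bot, i))"
  by (erule linking.cases) auto

lemma linking_Par_inv: "linking (Par a b) \<Longrightarrow> linking a \<and> linking b"
  by (erule linking.cases) auto

lemma linking_fill_sub: "linking (fill C t) \<Longrightarrow> nonleaf t \<Longrightarrow> linking t"
proof (induction C)
  case (CTensL c u)
  have "linking (Tens (fill c t) u)" using CTensL.prems by simp
  then have "linking (fill c t)" using linking_Tens_invL[OF _ nonleaf_fill[OF CTensL.prems(2)]] by blast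
  then show ?case using CTensL.IH CTensL.prems(2) by blast
next
  case (CTensR u c)
  have "linking (Tens u (fill c t))" using CTensR.prems by simp
  then have "linking (fill c t)" using linking_Tens_invR[OF _ nonleaf_fill[OF CTensR.prems(2)]] by blast
  then show ?case using CTensR.IH CTensR.prems(2) by blast
next
  case (CParL c u)
  have "linking (Par (fill c t) u)" using CParL.prems by simp
  then have "linking (fill c t)" using linking_Par_inv by blast
  then show ?case using CParL.IH CParL.prems(2) by blast
next
  case (CParR u c)
  have "linking (Par u (fill c t))" using CParR.prems by simp
  then have "linking (fill c t)" using linking_Par_inv by blast
  then show ?case using CParR.IH CParR.prems(2) by blast
qed simp

lemma linking_fill_repl: "linking (fill C t) \<Longrightarrow> nonleaf t \<Longrightarrow> linking t' \<Longrightarrow> nonleaf t' \<Longrightarrow> linking (fill C t')"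
proof (induction C)
  case (CTensL c u)
  have "linking (Tens (fill c t) u)" using CTensL.prems by simp
  then have 1: "linking (fill c t)" "\<exists>i. u = Leaf (Bot, i)" using linking_Tens_invL[OF _ nonleaf_fill[OF CTensL.prems(2)]] by blast+
  then have "linking (fill c t')" using CTensL.IH CTensL.prems by blast
  then show ?case using 1(2) l_botr by auto
next
  case (CTensR u c)
  have "linking (Tens u (fill c t))" using CTensR.prems by simp
  then have 1: "linking (fill c t)" "\<exists>i. u = Leaf (Bot, i)" using linking_Tens_invR[OF _ nonleaf_fill[OF CTensR.prems(2)]] by blast+
  then have "linking (fill c t')" using CTensR.IH CTensR.prems by blast
  then show ?case using 1(2) l_botl by auto
next
  case (CParL c u)
  have "linking (Par (fill c t) u)" using CParL.prems by simp
  then have 1: "linking (fill c t)" "linking u" using linking_Par_inv by blast+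
  then have "linking (fill c t')" using CParL.IH CParL.prems by blast
  then show ?case using 1(2) l_par by auto
next
  case (CParR u c)
  have "linking (Par u (fill c t))" using CParR.prems by simp
  then have 1: "linking (fill c t)" "linking u" using linking_Par_inv by blast+
  then have "linking (fill c t')" using CParR.IH CParR.prems by blast
  then show ?case using 1(2) l_par by auto
qed simp

definition swpos :: "bool list \<Rightarrow> bool list \<Rightarrow> bool list" where
  "swpos h g = (if \<exists>c q. g = h @ c # q then h @ (\<not> g ! length h) # drop (Suc (length h)) g else g)"

lemma swpos_in[simp]: "swpos h (h @ c # q) = h @ (\<not> c) # q"
  unfolding swpos_def by auto

lemma swpos_out: "\<not> (\<exists>c q. g = h @ c # q) \<Longrightarrow> swpos h g = g"
  unfolding swpos_def by auto

lemma swpos_inv[simp]: "swpos h (swpos h g) = g"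
proof (cases "\<exists>c q. g = h @ c # q")
  case True then show ?thesis by auto
next
  case False then show ?thesis by (simp add: swpos_out)
qed

definition swN :: "bool list \<Rightarrow> node \<Rightarrow> node" where
  "swN h n = (case n of LinkN g \<Rightarrow> LinkN (swpos h g) | _ \<Rightarrow> n)"

lemma swN_simps[simp]: "swN h (LeafN l) = LeafN l" "swN h (SeqN k p) = SeqN k p"
  "swN h (LinkN (h @ c # q)) = LinkN (h @ (\<not> c) # q)"
  unfolding swN_def by simp_all

lemma swN_inv[simp]: "swN h (swN h n) = n"
  unfolding swN_def by (cases n) auto

lemma swN_inj: "inj (swN h)"
  by (metis injI swN_inv)

lemma swN_fix: "(\<And>c q. n \<noteq> LinkN (h @ c # q)) \<Longrightarrow> swN h n = n"
  unfolding swN_def by (cases n) (auto simp: swpos_out)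

lemma swN_root[simp]: "swN h (LinkN h) = LinkN h"
  by (rule swN_fix) simp

lemma KC_fix:
  "(`) (swN (hpos C)) ` KC C G s = KC C G s"
proof -
  have "swN (hpos C) ` e = e" if "e \<in> KC C G s" for e
  proof -
    have "swN (hpos C) n = n" if "n \<in> e" for n
      using swN_fix KC_nodes[OF \<open>e \<in> KC C G s\<close> that] by blast
    then show ?thesis by simp
  qed
  then show ?thesis by simp
qed

lemma NC_fix: "swN (hpos C) ` NC C G = NC C G"
proof -
  have "swN (hpos C) n = n" if "n \<in> NC C G" for n
    using swN_fix NC_nodes[OF that] by blast
  then show ?thesis by simp
qed

lemma pg_transfer:
  assumes "proof_graph P G" "linking P'" "mset (leaves P') = mset (leaves P)" "inj F"
    "\<And>s. \<exists>s0. sw_edges P' G s = (`) F ` sw_edges P G s0"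
    "pg_nodes P' G = F ` pg_nodes P G"
  shows "proof_graph P' G"
proof -
  have d: "distinct (map snd (leaves P'))"
  proof -
    have "mset (map snd (leaves P')) = mset (map snd (leaves P))" using assms(3) by (metis mset_map)
    then show ?thesis using assms(1) mset_eq_imp_distinct_iff unfolding proof_graph_def by blast
  qed
  have sw: "graph_connected (pg_nodes P' G) (sw_edges P' G s) \<and> graph_acyclic (sw_edges P' G s)" for s
  proof -
    obtain s0 where s0: "sw_edges P' G s = (`) F ` sw_edges P G s0" using assms(5) by blast
    have "graph_connected (pg_nodes P G) (sw_edges P G s0)" "graph_acyclic (sw_edges P G s0)"
      using assms(1) unfolding proof_graph_def by blast+
    then show ?thesis unfolding s0 assms(6) graph_acyclic_def using conn_map cyc_map[OF assms(4)] by blast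
  qed
  show ?thesis using assms(1,2,3) d sw unfolding proof_graph_def by simp
qed



lemma swap_common:
  fixes h :: "bool list" and F :: "node \<Rightarrow> node" and s s0 :: switching
  assumes F: "F = swN h" and s0: "s0 = (\<lambda>n. if n = LinkN h then \<not> s n else s (F n))"
  shows "tedges (\<lambda>q. LinkN (h @ True # q)) X s = (`) F ` tedges (\<lambda>q. LinkN (h @ False # q)) X s0"
    "tedges (\<lambda>q. LinkN (h @ False # q)) Y s = (`) F ` tedges (\<lambda>q. LinkN (h @ True # q)) Y s0"
    "F (tnode (\<lambda>q. LinkN (h @ False # q)) X []) = tnode (\<lambda>q. LinkN (h @ True # q)) X []"
    "F (tnode (\<lambda>q. LinkN (h @ True # q)) Y []) = tnode (\<lambda>q. LinkN (h @ False # q)) Y []"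
    "F ` tnodes (\<lambda>q. LinkN (h @ False # q)) X = tnodes (\<lambda>q. LinkN (h @ True # q)) X"
    "F ` tnodes (\<lambda>q. LinkN (h @ True # q)) Y = tnodes (\<lambda>q. LinkN (h @ False # q)) Y"
    "F (LinkN h) = LinkN h"
proof -
  have lf: "\<And>l. F (LeafN l) = LeafN l" using F by simp
  have mX: "(\<lambda>q. LinkN (h @ True # q)) = (\<lambda>q. F (LinkN (h @ False # q)))" using F by simp
  have mY: "(\<lambda>q. LinkN (h @ False # q)) = (\<lambda>q. F (LinkN (h @ True # q)))" using F by simp
  have cX: "tedges (\<lambda>q. LinkN (h @ False # q)) X (\<lambda>n. s (F n)) = tedges (\<lambda>q. LinkN (h @ False # q)) X s0"
    by (rule tedges_cong) (simp add: s0)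
  have cY: "tedges (\<lambda>q. LinkN (h @ True # q)) Y (\<lambda>n. s (F n)) = tedges (\<lambda>q. LinkN (h @ True # q)) Y s0"
    by (rule tedges_cong) (simp add: s0)
  show "tedges (\<lambda>q. LinkN (h @ True # q)) X s = (`) F ` tedges (\<lambda>q. LinkN (h @ False # q)) X s0"
    unfolding mX tedges_map[of F, OF lf] cX ..
  show "tedges (\<lambda>q. LinkN (h @ False # q)) Y s = (`) F ` tedges (\<lambda>q. LinkN (h @ True # q)) Y s0"
    unfolding mY tedges_map[of F, OF lf] cY ..
  show "F (tnode (\<lambda>q. LinkN (h @ False # q)) X []) = tnode (\<lambda>q. LinkN (h @ True # q)) X []"
    unfolding mX tnode_map[of F, OF lf] ..
  show "F (tnode (\<lambda>q. LinkN (h @ True # q)) Y []) = tnode (\<lambda>q. LinkN (h @ False # q)) Y []"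
    unfolding mY tnode_map[of F, OF lf] ..
  show "F ` tnodes (\<lambda>q. LinkN (h @ False # q)) X = tnodes (\<lambda>q. LinkN (h @ True # q)) X"
    unfolding mX tnodes_map[of F, OF lf] ..
  show "F ` tnodes (\<lambda>q. LinkN (h @ True # q)) Y = tnodes (\<lambda>q. LinkN (h @ False # q)) Y"
    unfolding mY tnodes_map[of F, OF lf] ..
  show "F (LinkN h) = LinkN h" using F by simp
qed

lemma swap_KC:
  assumes "s0 = (\<lambda>n. if n = LinkN (hpos C) then \<not> s n else s (swN (hpos C) n))"
  shows "(`) (swN (hpos C)) ` KC C G s0 = KC C G s"
proof -
  have "KC C G s0 = KC C G s"
  proof (rule KC_cong)
    fix n assume n: "\<forall>q. n \<noteq> LinkN (hpos C @ q)"
    then have "swN (hpos C) n = n" by (intro swN_fix) blast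
    moreover have "n \<noteq> LinkN (hpos C)" using n[rule_format, of "[]"] by simp
    ultimately show "s0 n = s n" using assms by simp
  qed
  then show ?thesis using KC_fix by simp
qed

lemma swap_par:
  assumes pg: "proof_graph (fill C (Par X Y)) G"
  shows "proof_graph (fill C (Par Y X)) G"
proof -
  define h where "h = hpos C"
  define F where "F = swN h"
  have lk0: "linking (fill C (Par X Y))" using pg proof_graph_def by blast
  have "linking (Par X Y)" using linking_fill_sub[OF lk0] by simp
  then have "linking (Par Y X)" using linking_Par_inv l_par by blast
  then have lk: "linking (fill C (Par Y X))" using linking_fill_repl[OF lk0] by simp
  have ms: "mset (leaves (fill C (Par Y X))) = mset (leaves (fill C (Par X Y)))"
    by (rule mset_leaves_fill) simp
  have E: "\<exists>s0. sw_edges (fill C (Par Y X)) G s = (`) F ` sw_edges (fill C (Par X Y)) G s0" for s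
  proof -
    define s0 where "s0 = (\<lambda>n. if n = LinkN h then \<not> s n else s (F n))"
    note sc = swap_common[OF F_def s0_def]
    have "s0 = (\<lambda>n. if n = LinkN (hpos C) then \<not> s n else s (swN (hpos C) n))" using s0_def F_def h_def by simp
    then have "(`) (swN (hpos C)) ` KC C G s0 = KC C G s" by (rule swap_KC)
    then have k: "(`) F ` KC C G s0 = KC C G s" using F_def h_def by simp
    have L: "sw_edges (fill C (Par Y X)) G s = KC C G s \<union>
      ((if s (LinkN h) then {{LinkN h, tnode (\<lambda>q. LinkN (h @ False # q)) Y []}}
        else {{LinkN h, tnode (\<lambda>q. LinkN (h @ True # q)) X []}})
       \<union> tedges (\<lambda>q. LinkN (h @ False # q)) Y s \<union> tedges (\<lambda>q. LinkN (h @ True # q)) X s)"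
      using sw_edges_fill[of "Par Y X" C G s] tedges_Par[of "\<lambda>q. LinkN (h @ q)" Y X s] h_def by simp
    have R: "sw_edges (fill C (Par X Y)) G s0 = KC C G s0 \<union>
      ((if s0 (LinkN h) then {{LinkN h, tnode (\<lambda>q. LinkN (h @ False # q)) X []}}
        else {{LinkN h, tnode (\<lambda>q. LinkN (h @ True # q)) Y []}})
       \<union> tedges (\<lambda>q. LinkN (h @ False # q)) X s0 \<union> tedges (\<lambda>q. LinkN (h @ True # q)) Y s0)"
      using sw_edges_fill[of "Par X Y" C G s0] tedges_Par[of "\<lambda>q. LinkN (h @ q)" X Y s0] h_def by simp
    have s0h: "s0 (LinkN h) = (\<not> s (LinkN h))" using s0_def by simp
    have "(`) F ` sw_edges (fill C (Par X Y)) G s0 = sw_edges (fill C (Par Y X)) G s"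
      unfolding L R image_Un k sc(1,2) s0h using sc(3,4,7) by auto
    then show ?thesis by metis
  qed
  have N: "pg_nodes (fill C (Par Y X)) G = F ` pg_nodes (fill C (Par X Y)) G"
  proof -
    note sc = swap_common[OF F_def refl]
    have "F ` NC C G = NC C G" using NC_fix F_def h_def by simp
    then show ?thesis
      using pg_nodes_fill[of "Par Y X" C G] pg_nodes_fill[of "Par X Y" C G] h_def sc(5,6,7)
      by (simp add: tnodes_simps image_Un Un_ac)
  qed
  show ?thesis by (rule pg_transfer[OF pg lk ms _ E N]) (simp add: F_def swN_inj)
qed

lemma swap_tens:
  assumes pg: "proof_graph (fill C (Tens X Y)) G"
  shows "proof_graph (fill C (Tens Y X)) G"
proof -
  define h where "h = hpos C"
  define F where "F = swN h"
  have lk0: "linking (fill C (Tens X Y))" using pg proof_graph_def by blast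
  have "linking (Tens X Y)" using linking_fill_sub[OF lk0] by simp
  then have "linking (Tens Y X)" by (cases rule: linking.cases) (auto intro: linking.intros)
  then have lk: "linking (fill C (Tens Y X))" using linking_fill_repl[OF lk0] by simp
  have ms: "mset (leaves (fill C (Tens Y X))) = mset (leaves (fill C (Tens X Y)))"
    by (rule mset_leaves_fill) simp
  have E: "\<exists>s0. sw_edges (fill C (Tens Y X)) G s = (`) F ` sw_edges (fill C (Tens X Y)) G s0" for s
  proof -
    define s0 where "s0 = (\<lambda>n. if n = LinkN h then \<not> s n else s (F n))"
    note sc = swap_common[OF F_def s0_def]
    have "s0 = (\<lambda>n. if n = LinkN (hpos C) then \<not> s n else s (swN (hpos C) n))" using s0_def F_def h_def by simp
    then have "(`) (swN (hpos C)) ` KC C G s0 = KC C G s" by (rule swap_KC)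
    then have k: "(`) F ` KC C G s0 = KC C G s" using F_def h_def by simp
    have L: "sw_edges (fill C (Tens Y X)) G s = KC C G s \<union>
      ({{LinkN h, tnode (\<lambda>q. LinkN (h @ False # q)) Y []}, {LinkN h, tnode (\<lambda>q. LinkN (h @ True # q)) X []}}
       \<union> tedges (\<lambda>q. LinkN (h @ False # q)) Y s \<union> tedges (\<lambda>q. LinkN (h @ True # q)) X s)"
      using sw_edges_fill[of "Tens Y X" C G s] tedges_Tens[of "\<lambda>q. LinkN (h @ q)" Y X s] h_def by simp
    have R: "sw_edges (fill C (Tens X Y)) G s0 = KC C G s0 \<union>
      ({{LinkN h, tnode (\<lambda>q. LinkN (h @ False # q)) X []}, {LinkN h, tnode (\<lambda>q. LinkN (h @ True # q)) Y []}}
       \<union> tedges (\<lambda>q. LinkN (h @ False # q)) X s0 \<union> tedges (\<lambda>q. LinkN (h @ True # q)) Y s0)"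
      using sw_edges_fill[of "Tens X Y" C G s0] tedges_Tens[of "\<lambda>q. LinkN (h @ q)" X Y s0] h_def by simp
    have "(`) F ` sw_edges (fill C (Tens X Y)) G s0 = sw_edges (fill C (Tens Y X)) G s"
      unfolding L R image_Un k sc(1,2) using sc(3,4,7) by auto
    then show ?thesis by metis
  qed
  have N: "pg_nodes (fill C (Tens Y X)) G = F ` pg_nodes (fill C (Tens X Y)) G"
  proof -
    note sc = swap_common[OF F_def refl]
    have "F ` NC C G = NC C G" using NC_fix F_def h_def by simp
    then show ?thesis
      using pg_nodes_fill[of "Tens Y X" C G] pg_nodes_fill[of "Tens X Y" C G] h_def sc(5,6,7)
      by (simp add: tnodes_simps image_Un Un_ac)
  qed
  show ?thesis by (rule pg_transfer[OF pg lk ms _ E N]) (simp add: F_def swN_inj)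
qed



lemma first_entry:
  assumes "(adj E)\<^sup>*\<^sup>* z n" "z \<in> W" "n \<notin> W"
  shows "\<exists>w m. (adj {e \<in> E. e \<subseteq> W})\<^sup>*\<^sup>* z w \<and> w \<in> W \<and> m \<notin> W \<and> {w, m} \<in> E"
proof -
  have "(y \<in> W \<and> (adj {e \<in> E. e \<subseteq> W})\<^sup>*\<^sup>* z y) \<or>
        (\<exists>w m. (adj {e \<in> E. e \<subseteq> W})\<^sup>*\<^sup>* z w \<and> w \<in> W \<and> m \<notin> W \<and> {w, m} \<in> E)"
    if "(adj E)\<^sup>*\<^sup>* z y" for y
    using that
  proof (induction rule: rtranclp_induct)
    case base then show ?case using assms(2) by simp
  next
    case (step y y')
    have e: "{y, y'} \<in> E" using step(2) by (simp add: adj_def)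
    from step(3) show ?case
    proof
      assume a: "y \<in> W \<and> (adj {e \<in> E. e \<subseteq> W})\<^sup>*\<^sup>* z y"
      show ?case
      proof (cases "y' \<in> W")
        case True
        then have "adj {e \<in> E. e \<subseteq> W} y y'" using e a by (simp add: adj_def)
        then show ?thesis using a True by (meson rtranclp.rtrancl_into_rtrancl)
      next
        case False
        then show ?thesis using a e by blast
      qed
    qed blast
  qed
  then show ?thesis using assms by blast
qed

lemma epath_in_W:
  assumes "epath EW vs" "vs \<noteq> []" "hd vs \<in> W" "\<And>e. e \<in> EW \<Longrightarrow> e \<subseteq> W"
  shows "set vs \<subseteq> W"
  using assms
proof (induction EW vs rule: epath.induct)
  case (3 E x y r)
  have "{x, y} \<in> E" using 3(2) by simp
  then have "{x, y} \<subseteq> W" using 3(5) by blast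
  then have "y \<in> W" by simp
  then have "set (y # r) \<subseteq> W" using 3 by simp
  then show ?case using 3(4) by simp
qed auto

lemma mk_cycle:
  assumes "epath G' D" "distinct D" "D \<noteq> []" "hd D = b" "set D \<subseteq> U"
    "epath G' L" "distinct L" "L \<noteq> []" "hd L = z" "last L = w" "set L \<inter> U = {}"
    "{last D, w} \<in> G'" "{z, b} \<in> G'" "length D + length L \<ge> 3"
  shows "has_cycle G'"
proof -
  let ?vs = "D @ rev L"
  have "epath G' ?vs" unfolding epath_append epath_rev using assms(1,6,8,10,12) by (simp add: hd_rev)
  moreover have "distinct ?vs" using assms(2,5,7,11) by auto
  moreover have "length ?vs \<ge> 3" using assms(14) by simp
  moreover have "{last ?vs, hd ?vs} \<in> G'" using assms(3,4,8,9,13) by (simp add: last_rev insert_commute)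
  ultimately show ?thesis by (rule cycle_of_path)
qed

lemma leaf_in_leaves: "p \<in> pos t \<Longrightarrow> sub t p = Leaf l \<Longrightarrow> l \<in> set (leaves t)"
proof (induction t arbitrary: p)
  case (Leaf x) then show ?case by auto
next
  case (Tens t1 t2) then show ?case by (cases p) (auto split: if_splits)
next
  case (Par t1 t2) then show ?case by (cases p) (auto split: if_splits)
next
  case (Cut t1 t2) then show ?case by (cases p) (auto split: if_splits)
qed

lemma leaf_pos_unique_bin:
  assumes IH1: "\<And>p1 p2 l1 l2. distinct (map snd (leaves X)) \<Longrightarrow> p1 \<in> pos X \<Longrightarrow> p2 \<in> pos X \<Longrightarrow>
       sub X p1 = Leaf l1 \<Longrightarrow> sub X p2 = Leaf l2 \<Longrightarrow> snd l1 = snd l2 \<Longrightarrow> p1 = p2"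
    and IH2: "\<And>p1 p2 l1 l2. distinct (map snd (leaves Y)) \<Longrightarrow> p1 \<in> pos Y \<Longrightarrow> p2 \<in> pos Y \<Longrightarrow>
       sub Y p1 = Leaf l1 \<Longrightarrow> sub Y p2 = Leaf l2 \<Longrightarrow> snd l1 = snd l2 \<Longrightarrow> p1 = p2"
    and T: "bin T X Y" and d: "distinct (map snd (leaves T))"
    and p: "p1 \<in> pos T" "p2 \<in> pos T" "sub T p1 = Leaf l1" "sub T p2 = Leaf l2" "snd l1 = snd l2"
  shows "p1 = p2"
proof -
  have lv: "leaves T = leaves X @ leaves Y" and ps: "pos T = insert [] ((#) False ` pos X \<union> (#) True ` pos Y)"
    and sb: "\<And>c q. sub T (c # q) = sub (if c then Y else X) q" and sn: "sub T [] = T"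
    using T unfolding bin_def by auto
  have dX: "distinct (map snd (leaves X))" and dY: "distinct (map snd (leaves Y))"
    and disj: "snd ` set (leaves X) \<inter> snd ` set (leaves Y) = {}" using d lv by auto
  have nl: "\<forall>l. T \<noteq> Leaf l" using T unfolding bin_def by auto
  obtain c1 q1 where 1: "p1 = c1 # q1" using p(3) sn nl by (cases p1) auto
  obtain c2 q2 where 2: "p2 = c2 # q2" using p(4) sn nl by (cases p2) auto
  have q1: "q1 \<in> pos (if c1 then Y else X)" "sub (if c1 then Y else X) q1 = Leaf l1" using p(1,3) 1 ps sb by auto
  have q2: "q2 \<in> pos (if c2 then Y else X)" "sub (if c2 then Y else X) q2 = Leaf l2" using p(2,4) 2 ps sb by auto
  show ?thesis
  proof (cases "c1 = c2")
    case True
    then show ?thesis using q1 q2 IH1[OF dX] IH2[OF dY] 1 2 p(5) by (cases c1) auto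
  next
    case False
    have "l1 \<in> set (leaves (if c1 then Y else X))" by (rule leaf_in_leaves[OF q1])
    moreover have "l2 \<in> set (leaves (if c2 then Y else X))" by (rule leaf_in_leaves[OF q2])
    ultimately show ?thesis using disj False p(5) by (cases c1; cases c2) force+
  qed
qed

lemma leaf_pos_unique:
  "distinct (map snd (leaves t)) \<Longrightarrow> p1 \<in> pos t \<Longrightarrow> p2 \<in> pos t \<Longrightarrow>
   sub t p1 = Leaf l1 \<Longrightarrow> sub t p2 = Leaf l2 \<Longrightarrow> snd l1 = snd l2 \<Longrightarrow> p1 = p2"
proof (induction t arbitrary: p1 p2 l1 l2)
  case (Leaf x) then show ?case by simp
next
  case (Tens X Y)
  have b: "bin (Tens X Y) X Y" unfolding bin_def by blast
  show ?case by (rule leaf_pos_unique_bin[OF Tens.IH(1) Tens.IH(2) b Tens.prems])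
next
  case (Par X Y)
  have b: "bin (Par X Y) X Y" unfolding bin_def by blast
  show ?case by (rule leaf_pos_unique_bin[OF Par.IH(1) Par.IH(2) b Par.prems])
next
  case (Cut X Y)
  have b: "bin (Cut X Y) X Y" unfolding bin_def by blast
  show ?case by (rule leaf_pos_unique_bin[OF Cut.IH(1) Cut.IH(2) b Cut.prems])
qed

lemma tnode_inj:
  assumes "inj mk" "\<And>p l. mk p \<noteq> LeafN l" "distinct (map snd (leaves t))"
    "p1 \<in> pos t" "p2 \<in> pos t" "tnode mk t p1 = tnode mk t p2"
  shows "p1 = p2"
proof (cases "sub t p1")
  case (Leaf l1)
  show ?thesis
  proof (cases "sub t p2")
    case (Leaf l2)
    then show ?thesis using \<open>sub t p1 = Leaf l1\<close> assms(6) leaf_pos_unique[OF assms(3,4,5)] unfolding tnode_def by simp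
  qed (use assms(2,6) \<open>sub t p1 = Leaf l1\<close> in \<open>auto simp: tnode_def dest: sym\<close>)
next
  case (Tens a b)
  then show ?thesis using assms unfolding tnode_def by (cases "sub t p2") (auto simp: inj_eq)
next
  case (Par a b)
  then show ?thesis using assms unfolding tnode_def by (cases "sub t p2") (auto simp: inj_eq)
next
  case (Cut a b)
  then show ?thesis using assms unfolding tnode_def by (cases "sub t p2") (auto simp: inj_eq)
qed

definition dl :: "bool list \<Rightarrow> bool list \<Rightarrow> bool list list" where
  "dl base rest = map (\<lambda>j. base @ take j rest) [0..<Suc (length rest)]"

lemma dl_Nil[simp]: "dl base [] = [base]"
  by (simp add: dl_def)

lemma dl_snoc: "dl base (rest @ [c]) = dl base rest @ [base @ rest @ [c]]"
proof -
  have "[0..<Suc (length (rest @ [c]))] = [0..<Suc (length rest)] @ [Suc (length rest)]" by simp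
  moreover have "map (\<lambda>j. base @ take j (rest @ [c])) [0..<Suc (length rest)] = map (\<lambda>j. base @ take j rest) [0..<Suc (length rest)]"
    by (rule map_cong) auto
  ultimately show ?thesis unfolding dl_def by simp
qed

lemma dl_props: "dl base rest \<noteq> []" "hd (dl base rest) = base" "last (dl base rest) = base @ rest"
  "length (dl base rest) = Suc (length rest)" "distinct (dl base rest)"
  "set (dl base rest) = {base @ take j rest | j. j \<le> length rest}"
proof -
  show "dl base rest \<noteq> []" "length (dl base rest) = Suc (length rest)" by (simp_all add: dl_def)
  show "hd (dl base rest) = base" by (simp add: dl_def hd_map del: upt_Suc)
  show "last (dl base rest) = base @ rest" by (simp add: dl_def last_map del: upt_Suc)
  show "set (dl base rest) = {base @ take j rest | j. j \<le> length rest}"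
    unfolding dl_def set_map set_upt atLeastLessThanSuc_atLeastAtMost by (auto simp: image_def)
  have "inj_on (\<lambda>j. base @ take j rest) {0..<Suc (length rest)}"
  proof (rule inj_onI)
    fix x y assume "x \<in> {0..<Suc (length rest)}" "y \<in> {0..<Suc (length rest)}" "base @ take x rest = base @ take y rest"
    then have "length (take x rest) = length (take y rest)" by simp
    then show "x = y" using \<open>x \<in> _\<close> \<open>y \<in> _\<close> by simp
  qed
  then show "distinct (dl base rest)" unfolding dl_def by (simp add: distinct_map del: upt_Suc)
qed

lemma parent_tnode: "p @ [c] \<in> pos t \<Longrightarrow> tnode mk t p = mk p"
proof (induction t arbitrary: p mk)
  case (Leaf x) then show ?case by (cases p) auto
next
  case (Tens t1 t2) then show ?case by (cases p) auto
next
  case (Par t1 t2) then show ?case by (cases p) auto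
next
  case (Cut t1 t2) then show ?case by (cases p) auto
qed

lemma dl_path:
  assumes "base @ rest \<in> pos t" "\<And>j. j < length rest \<Longrightarrow> s (mk (base @ take j rest)) = (\<not> rest ! j)"
  shows "epath (tedges mk t s) (map (tnode mk t) (dl base rest))"
  using assms
proof (induction rest rule: rev_induct)
  case Nil then show ?case by simp
next
  case (snoc c rest)
  have pr: "base @ rest \<in> pos t" using snoc(2) pos_prefix[of "base @ rest" "[c]" t] by simp
  have sw: "s (mk (base @ take j rest)) = (\<not> rest ! j)" if "j < length rest" for j
    using snoc(3)[of j] that by (simp add: nth_append)
  have IH: "epath (tedges mk t s) (map (tnode mk t) (dl base rest))" using snoc(1)[OF pr sw] by blast
  have pc: "(base @ rest) @ [c] \<in> pos t" using snoc(2) by simp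
  have tp: "tnode mk t (base @ rest) = mk (base @ rest)" using parent_tnode[OF pc] .
  have s1: "s (mk (base @ rest)) = (\<not> c)" using snoc(3)[of "length rest"] by simp
  have "{tnode mk t (base @ rest), tnode mk t ((base @ rest) @ [c])} \<in> tedges mk t s"
    by (rule tedgesI[OF pc]) (simp add: tp s1)
  then show ?case unfolding dl_snoc map_append epath_append using IH dl_props(1,3)[of base rest]
    by (simp add: last_map)
qed

definition tw :: "bool list \<Rightarrow> bool list \<Rightarrow> bool list \<Rightarrow> switching \<Rightarrow> switching" where
  "tw h base rest s = (\<lambda>n. case n of LinkN g \<Rightarrow>
     (if \<exists>j<length rest. g = h @ base @ take j rest then \<not> rest ! (length g - length h - length base) else s n)
   | _ \<Rightarrow> s n)"

lemma tw_at: "j < length rest \<Longrightarrow> tw h base rest s (LinkN (h @ base @ take j rest)) = (\<not> rest ! j)"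
  unfolding tw_def by auto

lemma tw_off: "(\<And>j. j < length rest \<Longrightarrow> n \<noteq> LinkN (h @ base @ take j rest)) \<Longrightarrow> tw h base rest s n = s n"
  unfolding tw_def by (cases n) auto

lemma tw_ctx: "\<forall>q. n \<noteq> LinkN (h @ q) \<Longrightarrow> tw h base rest s n = s n"
  by (rule tw_off) auto



locale sit =
  fixes C R :: "leaf ctx" and Q :: "leaf tree" and \<Gamma> :: "leaf tree list" and x :: lit and i j k :: nat
  assumes pg: "proof_graph (fill C (Par (Tens (Leaf (dlit x, j)) Q) (Tens (fill R (Leaf (x, i))) (Leaf (Bot, k)))))
     (Cut (Leaf (x, i)) (Leaf (dlit x, j)) # \<Gamma>)"
begin

abbreviation "h \<equiv> hpos C"
abbreviation "Q' \<equiv> Tens (Leaf (dlit x, j)) Q"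
abbreviation "R' \<equiv> fill R (Leaf (x, i))"
abbreviation "Zt \<equiv> Leaf (Bot, k)"
abbreviation "A \<equiv> Par Q' (Tens R' Zt)"
abbreviation "GG \<equiv> Cut (Leaf (x, i)) (Leaf (dlit x, j)) # \<Gamma>"
abbreviation "P2 \<equiv> fill C A"
abbreviation "mk \<equiv> (\<lambda>q. LinkN (hpos C @ q))"
abbreviation "tn \<equiv> tnode mk A"
abbreviation "na \<equiv> LinkN (hpos C)"
abbreviation "nb \<equiv> LinkN (hpos C @ [True])"
abbreviation "nq \<equiv> LinkN (hpos C @ [False])"
abbreviation "nz \<equiv> LeafN k"
abbreviation "nc \<equiv> SeqN 0 []"
abbreviation "nr \<equiv> tnode (\<lambda>q. LinkN (hpos C @ True # False # q)) R' []"
abbreviation "ri \<equiv> False # hpos R"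

lemma dist_A: "distinct (map snd (leaves A))"
proof -
  have "distinct (map snd (leaves P2))" using pg unfolding proof_graph_def by blast
  then have "distinct (map snd (lpre C @ leaves A @ lpost C))" by (simp only: leaves_fill)
  then show ?thesis unfolding map_append distinct_append by blast
qed

lemma tn_inj: "p1 \<in> pos A \<Longrightarrow> p2 \<in> pos A \<Longrightarrow> tn p1 = tn p2 \<Longrightarrow> p1 = p2"
  by (rule tnode_inj[OF _ _ dist_A]) (auto simp: inj_def)

lemma tn_distinct:
  assumes "set PL \<subseteq> pos A" "distinct PL"
  shows "distinct (map tn PL)"
proof -
  have "inj_on tn (set PL)"
  proof (rule inj_onI)
    fix p1 p2 assume "p1 \<in> set PL" "p2 \<in> set PL" "tn p1 = tn p2"
    then show "p1 = p2" using tn_inj[of p1 p2] assms(1) by blast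
  qed
  then show ?thesis using assms(2) distinct_map by blast
qed

lemma pos_A: "p \<in> pos A \<longleftrightarrow> p = [] \<or> (\<exists>q. p = False # q \<and> q \<in> pos Q') \<or> p = [True] \<or> (\<exists>r. p = True # False # r \<and> r \<in> pos R') \<or> p = [True, True]"
  by (cases p; auto)

lemma pxi: "True # ri \<in> pos A" "tn (True # ri) = LeafN i"
proof -
  have "hpos R @ [] \<in> pos R'" by (rule pos_fill[THEN iffD2]) simp
  then show "True # ri \<in> pos A" by simp
  have "sub R' (hpos R @ []) = Leaf (x, i)" using sub_fill[of R "Leaf (x, i)" "[]"] by simp
  then show "tn (True # ri) = LeafN i" by (simp add: tnode_def)
qed

lemma tn_simps: "tn [] = na" "tn [True] = nb" "tn [False] = nq" "tn [True, True] = nz"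
  "tn [False, False] = LeafN j" "tn [True, False] = nr"
  by simp_all

lemma tn_cases: "tn p = mk p \<or> (\<exists>l. tn p = LeafN l)"
  by (rule tnode_cases)

lemma E_dec: "sw_edges P2 GG s = KC C GG s \<union> tedges mk A s"
  by (rule sw_edges_fill) simp

lemma tA_dec: "tedges mk A s = (if s na then {{na, nq}} else {{na, nb}})
   \<union> tedges (\<lambda>q. LinkN (hpos C @ False # q)) Q' s \<union> {{nb, nr}, {nb, nz}}
   \<union> tedges (\<lambda>q. LinkN (hpos C @ True # False # q)) R' s"
  by (simp add: tedges_Par tedges_Tens tedges_Leaf Un_ac)

lemma tree_P2: "graph_connected (pg_nodes P2 GG) (sw_edges P2 GG s)" "graph_acyclic (sw_edges P2 GG s)"
  using pg unfolding proof_graph_def by blast+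

lemma SEc: "{nc, LeafN i} \<in> KC C GG s" "{nc, LeafN j} \<in> KC C GG s"
proof -
  have "tedges (SeqN 0) (GG ! 0) s \<subseteq> SE GG s" unfolding SE_def by auto
  moreover have "{nc, LeafN i} \<in> tedges (SeqN 0) (GG ! 0) s" "{nc, LeafN j} \<in> tedges (SeqN 0) (GG ! 0) s"
    by (simp_all add: tedges_Cut)
  ultimately show "{nc, LeafN i} \<in> KC C GG s" "{nc, LeafN j} \<in> KC C GG s" unfolding KC_def by blast+
qed

lemma nodes_sub: "tnodes mk A \<subseteq> pg_nodes P2 GG"
  using pg_nodes_fill[of A C GG] by simp

end



lemma dl_pos: "base @ rest \<in> pos t \<Longrightarrow> set (dl base rest) \<subseteq> pos t"
proof
  fix p assume a: "base @ rest \<in> pos t" "p \<in> set (dl base rest)"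
  then obtain jj where p: "p = base @ take jj rest" using dl_props(6) by blast
  have "p @ drop jj rest \<in> pos t" using a(1) p by simp
  then show "p \<in> pos t" by (rule pos_prefix)
qed

lemma distinct_mid: "distinct (xs @ ys) \<Longrightarrow> c \<notin> set xs \<Longrightarrow> c \<notin> set ys \<Longrightarrow> distinct (xs @ [c] @ ys)"
  by auto

lemma last_map_dl: "last (map f (dl base rest)) = f (base @ rest)"
  using dl_props(1,3)[of base rest] by (simp add: last_map)

lemma hd_map_dl: "hd (map f (dl base rest)) = f base"
  using dl_props(1,2)[of base rest] by (simp add: hd_map)

context sit begin

lemma posF: "q \<in> pos Q' \<Longrightarrow> False # q \<in> pos A"
  by (subst pos_cons) simp

lemma tnA: "p \<in> pos A \<Longrightarrow> tn p \<in> tnodes mk A"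
  unfolding tnodes_mem by blast

lemma tn_nz: "p \<in> pos A \<Longrightarrow> p \<noteq> [True, True] \<Longrightarrow> tn p \<noteq> nz"
proof
  assume a: "p \<in> pos A" "p \<noteq> [True, True]" "tn p = nz"
  have "[True, True] \<in> pos A" by simp
  moreover have "tn p = tn [True, True]" using a(3) by simp
  ultimately show False using tn_inj[OF a(1)] a(2) by blast
qed

lemma not_TT: "rr = [] \<or> (\<exists>r. rr = False # r) \<Longrightarrow> [True] @ take jj rr \<noteq> [True, True]"
  by (cases rr; cases jj) auto

lemma ZE: "{nz, m'} \<in> tedges mk A s'' \<Longrightarrow> m' = nb"
proof -
  assume "{nz, m'} \<in> tedges mk A s''"
  then obtain p b' where pb: "{nz, m'} = {tn p, tn (p @ [b'])}" "p @ [b'] \<in> pos A" unfolding tedges_mem by blast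
  have tp: "tn p = mk p" using parent_tnode[OF pb(2)] .
  then have "tn p \<noteq> nz" by simp
  then have "nz = tn (p @ [b']) \<and> m' = tn p" using pb(1) by (metis doubleton_eq_iff)
  moreover have "[True, True] \<in> pos A" by simp
  ultimately have "p @ [b'] = [True, True]" using tn_inj[OF pb(2)] tn_simps(4) by metis
  then have "p = [True]" by (cases p rule: rev_cases) auto
  then show "m' = nb" using \<open>nz = tn (p @ [b']) \<and> m' = tn p\<close> by simp
qed

lemma side_main:
  assumes qq: "qq \<in> pos Q'"
    and path: "(adj (sw_edges P2 GG s - {{nb, nz}}))\<^sup>*\<^sup>* (tn (False # qq)) nz"
  shows False
proof -
  define E where "E = sw_edges P2 GG s - {{nb, nz}}"
  define U where "U = insert nc (tnodes mk A - {nz})"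
  define W where "W = - U"
  have inU: "tn p \<in> U" if "p \<in> pos A" "p \<noteq> [True, True]" for p
    unfolding U_def using tnA[OF that(1)] tn_nz[OF that] by blast
  have nU: "tn (False # qq) \<in> U" by (rule inU[OF posF[OF qq]]) simp
  have zW: "nz \<in> W" unfolding W_def U_def by simp
  have "(adj E)\<^sup>*\<^sup>* nz (tn (False # qq))" using rtr_sym path E_def by blast
  then obtain w m where wm: "(adj {e \<in> E. e \<subseteq> W})\<^sup>*\<^sup>* nz w" "w \<in> W" "m \<notin> W" "{w, m} \<in> E"
    using first_entry[of E nz _ W] zW nU W_def by blast
  obtain L where L: "epath {e \<in> E. e \<subseteq> W} L" "distinct L" "L \<noteq> []" "hd L = nz" "last L = w"
    using rtr_path[OF wm(1)] by blast
  have LW: "set L \<subseteq> W" using epath_in_W[OF L(1) L(3)] L(4) zW by blast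
  have EWK: "{e \<in> E. e \<subseteq> W} \<subseteq> KC C GG s"
  proof
    fix e assume e: "e \<in> {e \<in> E. e \<subseteq> W}"
    then have "e \<in> KC C GG s \<union> tedges mk A s" unfolding E_def E_dec by blast
    moreover have "e \<notin> tedges mk A s"
    proof
      assume "e \<in> tedges mk A s"
      then obtain p b' where pb: "e = {tn p, tn (p @ [b'])}" "p @ [b'] \<in> pos A" unfolding tedges_mem by blast
      have pA: "p \<in> pos A" using pb(2) by (rule pos_prefix)
      have tp: "tn p = mk p" using parent_tnode[OF pb(2)] .
      have "tn p \<in> U" unfolding U_def using tnA[OF pA] tp by simp
      moreover have "tn p \<in> W" using e pb(1) by blast
      ultimately show False unfolding W_def by blast
    qed
    ultimately show "e \<in> KC C GG s" by blast
  qed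
  have wmK: "{w, m} \<in> KC C GG s"
  proof -
    have "{w, m} \<in> KC C GG s \<union> tedges mk A s" using wm(4) unfolding E_def E_dec by blast
    moreover have "{w, m} \<notin> tedges mk A s"
    proof
      assume a: "{w, m} \<in> tedges mk A s"
      then obtain p where p: "p \<in> pos A" "w = tn p" using tedges_nodes[OF a, of w] by blast
      have "w = nz"
      proof (rule ccontr)
        assume "w \<noteq> nz"
        then have "w \<in> U" unfolding U_def using tnA[OF p(1)] p(2) by blast
        then show False using wm(2) W_def by blast
      qed
      then have "m = nb" using ZE a by blast
      then show False using wm(4) \<open>w = nz\<close> E_def by (simp add: insert_commute)
    qed
    ultimately show ?thesis by blast
  qed
  have cyc: False if agree: "\<And>n. \<forall>q. n \<noteq> LinkN (hpos C @ q) \<Longrightarrow> s n = s' n"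
    and D: "epath (sw_edges P2 GG s') D" "distinct D" "D \<noteq> []" "hd D = nb" "set D \<subseteq> U" "last D = m"
    for s' D
  proof -
    have K: "KC C GG s = KC C GG s'" by (rule KC_cong) (rule agree)
    have sub: "KC C GG s \<subseteq> sw_edges P2 GG s'" using K E_dec by blast
    have eL: "epath (sw_edges P2 GG s') L" using epath_mono[OF L(1)] EWK sub by blast
    have e1: "{last D, w} \<in> sw_edges P2 GG s'" using D(6) wmK sub by (auto simp: insert_commute)
    have e2: "{nz, nb} \<in> sw_edges P2 GG s'" unfolding E_dec tA_dec by auto
    have LU: "set L \<inter> U = {}" using LW W_def by blast
    have len: "length D + length L \<ge> 3"
    proof (cases "length D \<ge> 2")
      case True then show ?thesis using L(3) by (cases L) auto
    next
      case False
      moreover have "length D \<noteq> 0" using D(3) by simp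
      ultimately have "length D = 1" by linarith
      then have "D = [nb]" using D(4) by (cases D) auto
      then have mb: "m = nb" using D(6) by simp
      show ?thesis
      proof (cases "length L \<ge> 2")
        case True then show ?thesis using \<open>length D = 1\<close> by simp
      next
        case False
        moreover have "length L \<noteq> 0" using L(3) by simp
        ultimately have "length L = 1" by linarith
        then have "w = nz" using L(4,5) by (cases L) auto
        then show ?thesis using wm(4) mb E_def by (simp add: insert_commute)
      qed
    qed
    have "has_cycle (sw_edges P2 GG s')"
      by (rule mk_cycle[OF D(1-5) eL L(2-5) LU e1 e2 len])
    then show False using tree_P2(2)[of s'] unfolding graph_acyclic_def by blast
  qed
  define sR where "sR = tw (hpos C) [True] ri s"
  have swR: "\<And>jj. jj < length ri \<Longrightarrow> sR (LinkN (hpos C @ [True] @ take jj ri)) = (\<not> ri ! jj)"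
    unfolding sR_def by (rule tw_at)
  have agR: "\<And>n. \<forall>q. n \<noteq> LinkN (hpos C @ q) \<Longrightarrow> s n = sR n" unfolding sR_def using tw_ctx by metis
  have pxi': "[True] @ ri \<in> pos A" using pxi(1) by simp
  have tA_sub: "tedges mk A s' \<subseteq> sw_edges P2 GG s'" for s' using E_dec by blast
  have KC_sub: "KC C GG s' \<subseteq> sw_edges P2 GG s'" for s' using E_dec by blast
  have pathR: "epath (sw_edges P2 GG s') (map tn (dl [True] ri))"
    if sw: "\<And>jj. jj < length ri \<Longrightarrow> s' (LinkN (hpos C @ [True] @ take jj ri)) = (\<not> ri ! jj)" for s'
  proof -
    have "epath (tedges mk A s') (map tn (dl [True] ri))" by (rule dl_path[OF pxi']) (use sw in simp)
    then show ?thesis using epath_mono tA_sub by blast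
  qed
  have dlR_pos: "set (dl [True] ri) \<subseteq> pos A" using dl_pos[OF pxi'] .
  have dlR_U: "set (map tn (dl [True] ri)) \<subseteq> U"
  proof
    fix n assume "n \<in> set (map tn (dl [True] ri))"
    then obtain p where p: "p \<in> set (dl [True] ri)" "n = tn p" by auto
    then obtain jj where "p = [True] @ take jj ri" using dl_props(6) by blast
    then have "p \<noteq> [True, True]" using not_TT[of ri jj] by simp
    then show "n \<in> U" using inU dlR_pos p by blast
  qed
  have dlR_d: "distinct (map tn (dl [True] ri))" using tn_distinct[OF dlR_pos dl_props(5)] .
  have nc_nt: "nc \<notin> set (map tn PL)" for PL
  proof
    assume "nc \<in> set (map tn PL)"
    then obtain p where "nc = tn p" by auto
    then show False using tn_cases[of p] by auto
  qed
  have ncU: "nc \<in> U" unfolding U_def by simp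
  have eRc: "{last (map tn (dl [True] ri)), hd [nc]} \<in> KC C GG s'" for s'
    using SEc(1)[of s'] pxi(2) by (simp add: last_map_dl insert_commute)
  have mU: "m \<in> U" using wm(3) W_def by blast
  then consider (c) "m = nc" | (t) p where "p \<in> pos A" "p \<noteq> [True, True]" "m = tn p"
  proof -
    assume H1: "m = nc \<Longrightarrow> thesis" and H2: "\<And>p. p \<in> pos A \<Longrightarrow> p \<noteq> [True, True] \<Longrightarrow> m = tn p \<Longrightarrow> thesis"
    show thesis
    proof (cases "m = nc")
      case True then show ?thesis using H1 by blast
    next
      case False
      then have "m \<in> tnodes mk A" "m \<noteq> nz" using mU U_def by auto
      then obtain p where "p \<in> pos A" "m = tn p" unfolding tnodes_mem by blast
      moreover have "p \<noteq> [True, True]" using \<open>m \<noteq> nz\<close> \<open>m = tn p\<close> by auto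
      ultimately show ?thesis using H2 by blast
    qed
  qed
  then show False
  proof cases
    case c
    let ?D = "map tn (dl [True] ri) @ [nc]"
    have "epath (sw_edges P2 GG sR) ?D"
      unfolding epath_append using pathR[of sR, OF swR] eRc[of sR] KC_sub[of sR] by auto
    moreover have "distinct ?D" using dlR_d nc_nt by simp
    moreover have "?D \<noteq> []" by simp
    moreover have "hd ?D = nb" using hd_map_dl[of tn "[True]" ri] dl_props(1)[of "[True]" ri] by simp
    moreover have "set ?D \<subseteq> U" using dlR_U ncU by simp
    moreover have "last ?D = m" using c by simp
    ultimately show False using cyc[OF agR] by blast
  next
    case t
    from t(1) consider (root) "p = []" | (tr) rr where "p = True # rr" "rr = [] \<or> (\<exists>r. rr = False # r)"
      | (fl) q' where "p = False # q'" "q' \<in> pos Q'"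
      using t(2) unfolding pos_A by blast
    then show False
    proof cases
      case root
      define s' where "s' = s(na := False)"
      have ag: "\<And>n. \<forall>q. n \<noteq> LinkN (hpos C @ q) \<Longrightarrow> s n = s' n"
        unfolding s'_def by (metis append_Nil2 fun_upd_other)
      have "{na, nb} \<in> tedges mk A s'" unfolding tA_dec s'_def by simp
      then have e1: "epath (sw_edges P2 GG s') [nb, na]" using tA_sub by (auto simp: insert_commute)
      have e2: "set [nb, na] \<subseteq> U" using inU[of "[]"] inU[of "[True]"] by simp
      have e3: "last [nb, na] = m" using t(3) root by simp
      have e4: "distinct [nb, na]" by simp
      show False by (rule cyc[OF ag e1 e4 _ _ e2 e3]) simp_all
    next
      case tr
      define s' where "s' = tw (hpos C) [True] rr s"
      have ag: "\<And>n. \<forall>q. n \<noteq> LinkN (hpos C @ q) \<Longrightarrow> s n = s' n" unfolding s'_def using tw_ctx by metis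
      have pp: "[True] @ rr \<in> pos A" using t(1) tr(1) by simp
      have "epath (tedges mk A s') (map tn (dl [True] rr))"
        by (rule dl_path[OF pp]) (simp only: s'_def tw_at)
      then have "epath (sw_edges P2 GG s') (map tn (dl [True] rr))" using epath_mono tA_sub by blast
      moreover have "distinct (map tn (dl [True] rr))" using tn_distinct[OF dl_pos[OF pp] dl_props(5)] .
      moreover have "map tn (dl [True] rr) \<noteq> []" using dl_props(1) by simp
      moreover have "hd (map tn (dl [True] rr)) = nb" using hd_map_dl[of tn "[True]" rr] by simp
      moreover have "set (map tn (dl [True] rr)) \<subseteq> U"
      proof
        fix n assume "n \<in> set (map tn (dl [True] rr))"
        then obtain p' where p': "p' \<in> set (dl [True] rr)" "n = tn p'" by auto
        then obtain jj where "p' = [True] @ take jj rr" using dl_props(6) by blast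
        then have "p' \<noteq> [True, True]" using not_TT[OF tr(2)] by simp
        then show "n \<in> U" using inU dl_pos[OF pp] p' by blast
      qed
      moreover have "last (map tn (dl [True] rr)) = m" using last_map_dl[of tn "[True]" rr] t(3) tr(1) by simp
      ultimately show False using cyc[OF ag] by blast
    next
      case fl
      show False
      proof (cases "q' = [False]")
        case True
        let ?D = "map tn (dl [True] ri) @ [nc, LeafN j]"
        have "epath (sw_edges P2 GG sR) ?D"
          unfolding epath_append using pathR[of sR, OF swR] eRc[of sR] KC_sub[of sR] SEc(2)[of sR]
          by auto
        moreover have "distinct ?D"
        proof -
          have "LeafN j \<notin> set (map tn (dl [True] ri))"
          proof
            assume "LeafN j \<in> set (map tn (dl [True] ri))"
            then obtain p' where p': "p' \<in> set (dl [True] ri)" "tn p' = tn [False, False]" by auto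
            have "[False, False] \<in> pos A" by simp
            then have "p' = [False, False]" using tn_inj dlR_pos p' by blast
            then show False using p'(1) dl_props(6) by auto
          qed
          then show ?thesis using dlR_d nc_nt by simp
        qed
        moreover have "hd ?D = nb" using hd_map_dl[of tn "[True]" ri] dl_props(1)[of "[True]" ri] by simp
        moreover have "?D \<noteq> []" by simp
        moreover have "set ?D \<subseteq> U" using dlR_U ncU inU[of "[False, False]"] by simp
        moreover have "last ?D = m" using t(3) fl(1) True by simp
        ultimately show False using cyc[OF agR] by blast
      next
        case False
        define s2 where "s2 = tw (hpos C) [False] q' sR"
        have ag: "\<And>n. \<forall>q. n \<noteq> LinkN (hpos C @ q) \<Longrightarrow> s n = s2 n"
          unfolding s2_def using tw_ctx agR by metis
        have pq: "[False] @ q' \<in> pos A" using posF[OF fl(2)] by simp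
        have sw1: "s2 (LinkN (hpos C @ [True] @ take jj ri)) = (\<not> ri ! jj)" if "jj < length ri" for jj
        proof -
          have "s2 (LinkN (hpos C @ [True] @ take jj ri)) = sR (LinkN (hpos C @ [True] @ take jj ri))"
            unfolding s2_def by (rule tw_off) simp
          then show ?thesis using swR[OF that] by simp
        qed
        have pC: "epath (tedges mk A s2) (map tn (dl [False] q'))"
          by (rule dl_path[OF pq]) (simp only: s2_def tw_at)
        have ej: "{LeafN j, nq} \<in> tedges mk A s2" unfolding tA_dec by (simp add: tedges_Tens insert_commute)
        let ?D = "map tn (dl [True] ri) @ [nc] @ [LeafN j] @ map tn (dl [False] q')"
        have "epath (sw_edges P2 GG s2) ?D"
        proof -
          have "epath (sw_edges P2 GG s2) (map tn (dl [True] ri))" using pathR[of s2] sw1 by blast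
          moreover have "epath (sw_edges P2 GG s2) (map tn (dl [False] q'))" using pC epath_mono tA_sub by blast
          moreover have "{nc, LeafN j} \<in> sw_edges P2 GG s2" using SEc(2) KC_sub by blast
          moreover have "{LeafN j, hd (map tn (dl [False] q'))} \<in> sw_edges P2 GG s2"
            using ej tA_sub hd_map_dl[of tn "[False]" q'] by auto
          moreover have "{last (map tn (dl [True] ri)), hd ([nc] @ [LeafN j] @ map tn (dl [False] q'))} \<in> sw_edges P2 GG s2"
            using eRc[of s2] KC_sub by auto
          ultimately show ?thesis unfolding epath_append using dl_props(1) by simp
        qed
        moreover have "distinct ?D"
        proof -
          define PL2 where "PL2 = [False, False] # dl [False] q'"
          have m2: "[LeafN j] @ map tn (dl [False] q') = map tn PL2" unfolding PL2_def by simp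
          have nFF: "[False, False] \<notin> set (dl [False] q')"
          proof
            assume "[False, False] \<in> set (dl [False] q')"
            then obtain jj where jj: "[False, False] = [False] @ take jj q'" using dl_props(6) by blast
            then obtain t where qt: "q' = False # t" by (cases q'; cases jj) auto
            then have "t \<in> pos (Leaf (dlit x, j))" using fl(2) by auto
            then have "t = []" by simp
            then show False using qt False by simp
          qed
          have s12: "set (dl [True] ri @ PL2) \<subseteq> pos A" unfolding PL2_def using dlR_pos dl_pos[OF pq] by simp
          have d12: "distinct (dl [True] ri @ PL2)"
          proof -
            have "set (dl [True] ri) \<inter> set PL2 = {}" unfolding PL2_def using dl_props(6) by auto
            then show ?thesis unfolding PL2_def using nFF dl_props(5) by simp
          qed
          have "distinct (map tn (dl [True] ri @ PL2))" by (rule tn_distinct[OF s12 d12])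
          then have dd: "distinct (map tn (dl [True] ri) @ map tn PL2)" by simp
          have n1: "nc \<notin> set (map tn (dl [True] ri))" "nc \<notin> set (map tn PL2)" using nc_nt by blast+
          have "distinct (map tn (dl [True] ri) @ [nc] @ map tn PL2)"
            by (rule distinct_mid[OF dd n1])
          moreover have "map tn (dl [True] ri) @ [nc] @ [LeafN j] @ map tn (dl [False] q') = map tn (dl [True] ri) @ [nc] @ map tn PL2"
            using m2 by simp
          ultimately show ?thesis by simp
        qed
        moreover have "?D \<noteq> []" by simp
        moreover have "hd ?D = nb" using hd_map_dl[of tn "[True]" ri] dl_props(1)[of "[True]" ri] by simp
        moreover have "set ?D \<subseteq> U"
        proof -
          have "set (map tn (dl [False] q')) \<subseteq> U"
          proof
            fix n assume "n \<in> set (map tn (dl [False] q'))"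
            then obtain p' where p': "p' \<in> set (dl [False] q')" "n = tn p'" by auto
            then obtain jj where "p' = [False] @ take jj q'" using dl_props(6) by blast
            then have "p' \<noteq> [True, True]" by simp
            then show "n \<in> U" using inU dl_pos[OF pq] p' by blast
          qed
          then show ?thesis using dlR_U ncU inU[of "[False, False]"] by simp
        qed
        moreover have "last ?D = m" using last_map_dl[of tn "[False]" q'] t(3) fl(1) dl_props(1)[of "[False]" q'] by simp
        ultimately show False using cyc[OF ag] by blast
      qed
    qed
  qed
qed

end


lemma iso_rtr: "(adj KA)\<^sup>*\<^sup>* b w \<Longrightarrow> \<forall>e\<in>KA. b \<notin> e \<Longrightarrow> w = b"
proof (induction rule: rtranclp_induct)
  case base then show ?case by simp
next
  case (step y w')
  then have "y = b" by blast
  then show ?case using step(2,4) by (auto simp: adj_def)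
qed

lemma comp3:
  assumes "(adj (KA \<union> {{a, b}, {a, z}}))\<^sup>*\<^sup>* b w"
  shows "(adj KA)\<^sup>*\<^sup>* a w \<or> (adj KA)\<^sup>*\<^sup>* b w \<or> (adj KA)\<^sup>*\<^sup>* z w"
  using assms
proof (induction rule: rtranclp_induct)
  case base then show ?case by simp
next
  case (step y w')
  have e: "{y, w'} \<in> KA \<or> {y, w'} = {a, b} \<or> {y, w'} = {a, z}" using step(2) by (auto simp: adj_def)
  then show ?case
  proof (elim disjE)
    assume "{y, w'} \<in> KA"
    then have "adj KA y w'" by (simp add: adj_def)
    then show ?case using step(3) by (meson rtranclp.rtrancl_into_rtrancl)
  next
    assume "{y, w'} = {a, b}"
    then have "w' = a \<or> w' = b" by (metis doubleton_eq_iff)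
    then show ?case by auto
  next
    assume "{y, w'} = {a, z}"
    then have "w' = a \<or> w' = z" by (metis doubleton_eq_iff)
    then show ?case by auto
  qed
qed

lemma side_exchange:
  assumes T0: "tree V (KA \<union> {{a, b}, {b, r}, {b, z}})" and T1: "tree V (KA \<union> {{a, q}, {b, r}, {b, z}})"
    and side: "\<not> (adj (KA \<union> {{a, q}, {b, r}}))\<^sup>*\<^sup>* q z"
    and iso: "\<forall>e\<in>KA. b \<notin> e" and aq: "{a, q} \<notin> KA"
    and dist: "a \<noteq> b" "a \<noteq> q" "a \<noteq> r" "a \<noteq> z" "b \<noteq> q" "b \<noteq> r" "b \<noteq> z" "q \<noteq> r" "q \<noteq> z" "r \<noteq> z"
    and inV: "b \<in> V" "q \<in> V"
  shows "tree V (KA \<union> {{a, b}, {a, z}, {b, r}})" "tree V (KA \<union> {{a, b}, {a, z}, {b, q}})"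
proof -
  let ?G0 = "KA \<union> {{a, b}, {b, r}, {b, z}}"
  have bz: "{b, z} \<in> ?G0" by simp
  have G0m: "?G0 - {{b, z}} = KA \<union> {{a, b}, {b, r}}"
  proof -
    have "{b, z} \<notin> KA" using iso by blast
    moreover have "{b, z} \<noteq> {a, b}" "{b, z} \<noteq> {b, r}" using dist by (auto simp: doubleton_eq_iff)
    ultimately show ?thesis by auto
  qed
  have ba: "(adj (?G0 - {{b, z}}))\<^sup>*\<^sup>* b a" unfolding G0m by (rule rtr_sym, rule rtr_edge) simp
  have "tree V (insert {a, z} (?G0 - {{b, z}}))"
    by (rule exchange[OF T0 bz dist(7) inV(1) ba]) simp
  moreover have "insert {a, z} (?G0 - {{b, z}}) = KA \<union> {{a, b}, {a, z}, {b, r}}" unfolding G0m by auto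
  ultimately show TH: "tree V (KA \<union> {{a, b}, {a, z}, {b, r}})" by simp
  let ?H = "KA \<union> {{a, b}, {a, z}, {b, r}}"
  have br: "{b, r} \<in> ?H" by simp
  have Hm: "?H - {{b, r}} = KA \<union> {{a, b}, {a, z}}"
  proof -
    have "{b, r} \<notin> KA" using iso by blast
    moreover have "{b, r} \<noteq> {a, b}" "{b, r} \<noteq> {a, z}" using dist by (auto simp: doubleton_eq_iff)
    ultimately show ?thesis by auto
  qed
  have nbq: "\<not> (adj (?H - {{b, r}}))\<^sup>*\<^sup>* b q"
  proof
    assume "(adj (?H - {{b, r}}))\<^sup>*\<^sup>* b q"
    then have "(adj KA)\<^sup>*\<^sup>* a q \<or> (adj KA)\<^sup>*\<^sup>* b q \<or> (adj KA)\<^sup>*\<^sup>* z q" unfolding Hm by (rule comp3)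
    then show False
    proof (elim disjE)
      assume "(adj KA)\<^sup>*\<^sup>* a q"
      moreover have "KA \<subseteq> (KA \<union> {{a, q}, {b, r}, {b, z}}) - {{a, q}}" using aq by blast
      ultimately have "(adj ((KA \<union> {{a, q}, {b, r}, {b, z}}) - {{a, q}}))\<^sup>*\<^sup>* a q" using rtr_mono by blast
      moreover have "graph_acyclic (KA \<union> {{a, q}, {b, r}, {b, z}})" using T1 tree_def by blast
      ultimately show False using tree_edge_disc[of "KA \<union> {{a, q}, {b, r}, {b, z}}" a q] dist(2) by simp
    next
      assume "(adj KA)\<^sup>*\<^sup>* b q"
      then have "q = b" using iso_rtr iso by blast
      then show False using dist(5) by simp
    next
      assume "(adj KA)\<^sup>*\<^sup>* z q"
      then have "(adj (KA \<union> {{a, q}, {b, r}}))\<^sup>*\<^sup>* z q" using rtr_mono[of KA] by blast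
      then show False using side rtr_sym by blast
    qed
  qed
  have "(adj (?H - {{b, r}}))\<^sup>*\<^sup>* b q \<or> (adj (?H - {{b, r}}))\<^sup>*\<^sup>* r q"
    using two_comp[of V ?H b q r] TH inV br unfolding tree_def by blast
  then have rq: "(adj (?H - {{b, r}}))\<^sup>*\<^sup>* r q" using nbq by blast
  have "tree V (insert {b, q} (?H - {{b, r}}))"
    by (rule exchange[OF TH br dist(6) inV(1) _ rq]) simp
  moreover have "insert {b, q} (?H - {{b, r}}) = KA \<union> {{a, b}, {a, z}, {b, q}}" unfolding Hm by auto
  ultimately show "tree V (KA \<union> {{a, b}, {a, z}, {b, q}})" by simp
qed

fun psi :: "bool list \<Rightarrow> bool list" where
  "psi [] = []"
| "psi (False # q) = False # False # q"
| "psi [True] = [False]"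
| "psi (True # False # r) = False # True # r"
| "psi (True # True # q) = True # q"

lemma psi_inj: "psi a = psi b \<Longrightarrow> a = b"
  by (cases a rule: psi.cases; cases b rule: psi.cases) auto

definition PsiN :: "bool list \<Rightarrow> node \<Rightarrow> node" where
  "PsiN h n = (case n of LinkN g \<Rightarrow> (if \<exists>r. g = h @ r then LinkN (h @ psi (drop (length h) g)) else n) | _ \<Rightarrow> n)"

lemma PsiN_simps[simp]: "PsiN h (LinkN (h @ r)) = LinkN (h @ psi r)" "PsiN h (LeafN l) = LeafN l"
  "PsiN h (SeqN k p) = SeqN k p"
  unfolding PsiN_def by auto

lemma PsiN_h[simp]: "PsiN h (LinkN h) = LinkN h"
  using PsiN_simps(1)[of h "[]"] by simp

lemma PsiN_fix: "(\<And>c q. n \<noteq> LinkN (h @ c # q)) \<Longrightarrow> PsiN h n = n"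
proof (cases n)
  case (LinkN g)
  assume a: "\<And>c q. n \<noteq> LinkN (h @ c # q)"
  show ?thesis
  proof (cases "\<exists>r. g = h @ r")
    case True
    then obtain r where "g = h @ r" by blast
    moreover have "r = []" using a LinkN \<open>g = h @ r\<close> by (cases r) auto
    ultimately show ?thesis using LinkN by simp
  next
    case False then show ?thesis using LinkN unfolding PsiN_def by simp
  qed
qed (auto simp: PsiN_def)

lemma PsiN_inj: "inj (PsiN h)"
proof (rule injI)
  fix n1 n2 assume eq: "PsiN h n1 = PsiN h n2"
  show "n1 = n2"
  proof (cases n1)
    case (LinkN g1)
    show ?thesis
    proof (cases n2)
      case (LinkN g2)
      show ?thesis
      proof (cases "\<exists>r. g1 = h @ r")
        case True
        then obtain r1 where r1: "g1 = h @ r1" by blast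
        show ?thesis
        proof (cases "\<exists>r. g2 = h @ r")
          case True
          then obtain r2 where r2: "g2 = h @ r2" by blast
          then show ?thesis using eq \<open>n1 = LinkN g1\<close> LinkN r1 psi_inj by auto
        next
          case False
          then show ?thesis using eq \<open>n1 = LinkN g1\<close> LinkN r1 unfolding PsiN_def by auto
        qed
      next
        case False
        show ?thesis
        proof (cases "\<exists>r. g2 = h @ r")
          case True
          then obtain r2 where r2: "g2 = h @ r2" by blast
          then show ?thesis using eq \<open>n1 = LinkN g1\<close> LinkN False unfolding PsiN_def by auto
        next
          case False
          then show ?thesis using eq \<open>n1 = LinkN g1\<close> LinkN \<open>\<not> (\<exists>r. g1 = h @ r)\<close> unfolding PsiN_def by auto
        qed
      qed
    qed (use eq LinkN in \<open>auto simp: PsiN_def split: if_splits\<close>)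
  qed (use eq in \<open>auto simp: PsiN_def split: if_splits node.splits\<close>)
qed

lemma pg_transfer2:
  assumes "proof_graph P G" "linking P'" "mset (leaves P') = mset (leaves P)" "inj F"
    "\<And>s. \<exists>H. tree (pg_nodes P G) H \<and> sw_edges P' G s = (`) F ` H"
    "pg_nodes P' G = F ` pg_nodes P G"
  shows "proof_graph P' G"
proof -
  have d: "distinct (map snd (leaves P'))"
  proof -
    have "mset (map snd (leaves P')) = mset (map snd (leaves P))" using assms(3) by (metis mset_map)
    then show ?thesis using assms(1) mset_eq_imp_distinct_iff unfolding proof_graph_def by blast
  qed
  have sw: "graph_connected (pg_nodes P' G) (sw_edges P' G s) \<and> graph_acyclic (sw_edges P' G s)" for s
  proof -
    obtain H where H: "tree (pg_nodes P G) H" "sw_edges P' G s = (`) F ` H" using assms(5) by blast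
    have c: "graph_connected (pg_nodes P G) H" and a: "\<not> has_cycle H"
      using H(1) unfolding tree_def graph_acyclic_def by blast+
    have "graph_connected (F ` pg_nodes P G) ((`) F ` H)" by (rule conn_map[OF c])
    moreover have "\<not> has_cycle ((`) F ` H)" using cyc_map[OF assms(4)] a by blast
    ultimately show ?thesis unfolding H(2) assms(6) graph_acyclic_def by blast
  qed
  show ?thesis using assms(1,2,3) d sw unfolding proof_graph_def by simp
qed



lemma nlb: "\<not> linking (Leaf (Bot, k))"
  by (auto elim: linking.cases)

lemma linking_TensBot: "linking (Tens X (Leaf (Bot, k))) \<Longrightarrow> linking X"
  by (erule linking.cases) (auto simp: nlb)

context sit begin

abbreviation "B \<equiv> Tens (Par Q' R') Zt"
abbreviation "P3 \<equiv> fill C B"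
abbreviation "PP \<equiv> PsiN (hpos C)"

lemma side_ok: "side_cond P2 GG (hpos C) Q' k"
  unfolding side_cond_def
proof (intro allI ballI notI)
  fix s q assume q: "q \<in> pos Q'"
    and path: "(adj (sw_edges P2 GG s - {{tnode LinkN P2 (hpos C @ [True]), LeafN k}}))\<^sup>*\<^sup>*
        (tnode LinkN P2 (hpos C @ [False] @ q)) (LeafN k)"
  have 1: "tnode LinkN P2 (hpos C @ [True]) = nb" using tnode_fill[of LinkN C A "[True]"] by simp
  have 2: "tnode LinkN P2 (hpos C @ [False] @ q) = tn (False # q)"
    using tnode_fill[of LinkN C A "[False] @ q"] by simp
  show False using side_main[OF q, of s] path unfolding 1 2 by blast
qed

lemma tn_neq: "p1 \<in> pos A \<Longrightarrow> p2 \<in> pos A \<Longrightarrow> p1 \<noteq> p2 \<Longrightarrow> tn p1 \<noteq> tn p2"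
  using tn_inj by blast

lemma linkB: "linking P3"
proof -
  have l2: "linking P2" using pg proof_graph_def by blast
  have "linking A" using linking_fill_sub[OF l2] by simp
  then have "linking Q'" "linking (Tens R' Zt)" using linking_Par_inv by blast+
  moreover have "linking R'" using linking_TensBot calculation(2) by blast
  ultimately have "linking B" by (intro l_botr l_par)
  then show ?thesis using linking_fill_repl[OF l2] by simp
qed

lemma P3_pg: "proof_graph P3 GG"
proof (rule pg_transfer2[OF pg linkB _ PsiN_inj])
  show "mset (leaves P3) = mset (leaves P2)" by (rule mset_leaves_fill) simp
next
  have fixN: "PP ` NC C GG = NC C GG"
  proof -
    have "PP n = n" if "n \<in> NC C GG" for n using PsiN_fix NC_nodes[OF that] by blast
    then show ?thesis by simp
  qed
  have mQ: "(\<lambda>q. LinkN (hpos C @ False # False # q)) = (\<lambda>q. PP (LinkN (hpos C @ False # q)))" by simp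
  have mR: "(\<lambda>q. LinkN (hpos C @ False # True # q)) = (\<lambda>q. PP (LinkN (hpos C @ True # False # q)))" by simp
  have n1: "tnodes (\<lambda>q. LinkN (hpos C @ False # False # q)) Q' = PP ` tnodes (\<lambda>q. LinkN (hpos C @ False # q)) Q'"
    unfolding mQ by (rule tnodes_map) simp
  have n2: "tnodes (\<lambda>q. LinkN (hpos C @ False # True # q)) R' = PP ` tnodes (\<lambda>q. LinkN (hpos C @ True # False # q)) R'"
    unfolding mR by (rule tnodes_map) simp
  have pb: "PP nb = nq" using PsiN_simps(1)[of "hpos C" "[True]"] by simp
  show "pg_nodes P3 GG = PP ` pg_nodes P2 GG"
    unfolding pg_nodes_fill[of B C GG, simplified] pg_nodes_fill[of A C GG, simplified]
    using fixN n1 n2 pb by (simp add: tnodes_simps image_Un Un_ac insert_commute)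
next
  fix s :: switching
  define s1 where "s1 = (\<lambda>n. s (PP n))"
  define KA where "KA = KC C GG s \<union> tedges (\<lambda>q. LinkN (hpos C @ False # q)) Q' s1
      \<union> tedges (\<lambda>q. LinkN (hpos C @ True # False # q)) R' s1"
  define H where "H = KA \<union> {{na, nb}, {na, nz}, if s nq then {nb, nq} else {nb, nr}}"
  have agr: "s n = s1 n" if "\<forall>q. n \<noteq> LinkN (hpos C @ q)" for n
  proof -
    have "PP n = n" using PsiN_fix that by blast
    then show ?thesis unfolding s1_def by simp
  qed
  have G_of: "sw_edges P2 GG (s1(na := v)) = KA \<union> {if v then {na, nq} else {na, nb}, {nb, nr}, {nb, nz}}" for v
  proof -
    have K: "KC C GG (s1(na := v)) = KC C GG s"
      by (rule KC_cong[symmetric]) (metis agr append_Nil2 fun_upd_other)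
    have tQ: "tedges (\<lambda>q. LinkN (hpos C @ False # q)) Q' (s1(na := v)) = tedges (\<lambda>q. LinkN (hpos C @ False # q)) Q' s1"
      by (rule tedges_cong) simp
    have tR: "tedges (\<lambda>q. LinkN (hpos C @ True # False # q)) R' (s1(na := v)) = tedges (\<lambda>q. LinkN (hpos C @ True # False # q)) R' s1"
      by (rule tedges_cong) simp
    show ?thesis unfolding E_dec tA_dec K tQ tR KA_def by auto
  qed
  have iso: "\<forall>e\<in>KA. nb \<notin> e"
  proof
    fix e assume e: "e \<in> KA"
    show "nb \<notin> e"
    proof
      assume nbe: "nb \<in> e"
      from e show False unfolding KA_def
      proof (elim UnE)
        assume "e \<in> KC C GG s" then show False using KC_nodes[of e C GG s nb True "[]"] nbe by simp
      next
        assume "e \<in> tedges (\<lambda>q. LinkN (hpos C @ False # q)) Q' s1"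
        then obtain p where "nb = tnode (\<lambda>q. LinkN (hpos C @ False # q)) Q' p" using tedges_nodes nbe by blast
        then show False using tnode_cases[of "\<lambda>q. LinkN (hpos C @ False # q)" Q' p] by auto
      next
        assume "e \<in> tedges (\<lambda>q. LinkN (hpos C @ True # False # q)) R' s1"
        then obtain p where "nb = tnode (\<lambda>q. LinkN (hpos C @ True # False # q)) R' p" using tedges_nodes nbe by blast
        then show False using tnode_cases[of "\<lambda>q. LinkN (hpos C @ True # False # q)" R' p] by auto
      qed
    qed
  qed
  have aq: "{na, nq} \<notin> KA"
  proof
    assume e: "{na, nq} \<in> KA"
    then show False unfolding KA_def
    proof (elim UnE)
      assume "{na, nq} \<in> KC C GG s" then show False using KC_nodes[of "{na, nq}" C GG s nq False "[]"] by simp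
    next
      assume "{na, nq} \<in> tedges (\<lambda>q. LinkN (hpos C @ False # q)) Q' s1"
      then obtain p where "na = tnode (\<lambda>q. LinkN (hpos C @ False # q)) Q' p" using tedges_nodes by blast
      then show False using tnode_cases[of "\<lambda>q. LinkN (hpos C @ False # q)" Q' p] by auto
    next
      assume "{na, nq} \<in> tedges (\<lambda>q. LinkN (hpos C @ True # False # q)) R' s1"
      then obtain p where "na = tnode (\<lambda>q. LinkN (hpos C @ True # False # q)) R' p" using tedges_nodes by blast
      then show False using tnode_cases[of "\<lambda>q. LinkN (hpos C @ True # False # q)" R' p] by auto
    qed
  qed
  have P: "[] \<in> pos A" "[True] \<in> pos A" "[False] \<in> pos A" "[True, False] \<in> pos A" "[True, True] \<in> pos A"
    by simp_all
  have dist: "na \<noteq> nb" "na \<noteq> nq" "na \<noteq> nr" "na \<noteq> nz" "nb \<noteq> nq" "nb \<noteq> nr" "nb \<noteq> nz" "nq \<noteq> nr" "nq \<noteq> nz" "nr \<noteq> nz"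
    using tn_neq[OF P(1) P(2)] tn_neq[OF P(1) P(3)] tn_neq[OF P(1) P(4)] tn_neq[OF P(1) P(5)]
      tn_neq[OF P(2) P(3)] tn_neq[OF P(2) P(4)] tn_neq[OF P(2) P(5)] tn_neq[OF P(3) P(4)]
      tn_neq[OF P(3) P(5)] tn_neq[OF P(4) P(5)] by simp_all
  have inV: "nb \<in> pg_nodes P2 GG" "nq \<in> pg_nodes P2 GG"
    using nodes_sub tnA[OF P(2)] tnA[OF P(3)] by auto
  have T0: "tree (pg_nodes P2 GG) (KA \<union> {{na, nb}, {nb, nr}, {nb, nz}})"
    using tree_P2[of "s1(na := False)"] G_of[of False] unfolding tree_def by simp
  have T1: "tree (pg_nodes P2 GG) (KA \<union> {{na, nq}, {nb, nr}, {nb, nz}})"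
    using tree_P2[of "s1(na := True)"] G_of[of True] unfolding tree_def by simp
  have side: "\<not> (adj (KA \<union> {{na, nq}, {nb, nr}}))\<^sup>*\<^sup>* nq nz"
  proof
    assume a: "(adj (KA \<union> {{na, nq}, {nb, nr}}))\<^sup>*\<^sup>* nq nz"
    have "sw_edges P2 GG (s1(na := True)) - {{nb, nz}} = KA \<union> {{na, nq}, {nb, nr}}"
    proof -
      have "{nb, nz} \<notin> KA" using iso by blast
      moreover have "{nb, nz} \<noteq> {na, nq}" "{nb, nz} \<noteq> {nb, nr}" using dist by (auto simp: doubleton_eq_iff)
      ultimately show ?thesis unfolding G_of by auto
    qed
    then have "(adj (sw_edges P2 GG (s1(na := True)) - {{nb, nz}}))\<^sup>*\<^sup>* (tn (False # [])) nz" using a by simp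
    then show False using side_main[of "[]"] by simp
  qed
  note SX = side_exchange[OF T0 T1 side iso aq dist inV]
  have TH: "tree (pg_nodes P2 GG) H"
    unfolding H_def by (cases "s nq") (use SX in \<open>simp_all add: insert_commute\<close>)
  have mQ: "(\<lambda>q. LinkN (hpos C @ False # False # q)) = (\<lambda>q. PP (LinkN (hpos C @ False # q)))" by simp
  have mR: "(\<lambda>q. LinkN (hpos C @ False # True # q)) = (\<lambda>q. PP (LinkN (hpos C @ True # False # q)))" by simp
  have e1: "tedges (\<lambda>q. LinkN (hpos C @ False # False # q)) Q' s = (`) PP ` tedges (\<lambda>q. LinkN (hpos C @ False # q)) Q' s1"
    unfolding mQ s1_def by (rule tedges_map) simp
  have e2: "tedges (\<lambda>q. LinkN (hpos C @ False # True # q)) R' s = (`) PP ` tedges (\<lambda>q. LinkN (hpos C @ True # False # q)) R' s1"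
    unfolding mR s1_def by (rule tedges_map) simp
  have fixK: "(`) PP ` KC C GG s = KC C GG s"
  proof -
    have "PP ` e = e" if "e \<in> KC C GG s" for e
    proof -
      have "PP n = n" if "n \<in> e" for n using PsiN_fix KC_nodes[OF \<open>e \<in> KC C GG s\<close> that] by blast
      then show ?thesis by simp
    qed
    then show ?thesis by simp
  qed
  have pr: "PP nr = tnode (\<lambda>q. LinkN (hpos C @ False # True # q)) R' []"
    unfolding mR by (rule tnode_map[symmetric]) simp
  have pb: "PP nb = nq" using PsiN_simps(1)[of "hpos C" "[True]"] by simp
  have pq: "PP nq = LinkN (hpos C @ [False, False])" using PsiN_simps(1)[of "hpos C" "[False]"] by simp
  have "sw_edges P3 GG s = (`) PP ` H"
  proof -
    have "sw_edges P3 GG s = KC C GG s \<union> tedges (\<lambda>q. LinkN (hpos C @ q)) B s" by (rule sw_edges_fill) simp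
    also have "\<dots> = KC C GG s \<union> ({{na, nq}, {na, nz}} \<union> (if s nq then {{nq, LinkN (hpos C @ [False, False])}}
        else {{nq, tnode (\<lambda>q. LinkN (hpos C @ False # True # q)) R' []}})
      \<union> tedges (\<lambda>q. LinkN (hpos C @ False # False # q)) Q' s \<union> tedges (\<lambda>q. LinkN (hpos C @ False # True # q)) R' s)"
      by (simp add: tedges_Tens tedges_Par tedges_Leaf Un_ac insert_commute)
    also have "\<dots> = (`) PP ` H"
      unfolding H_def KA_def e1 e2 image_Un fixK using pb pq pr by auto
    finally show ?thesis .
  qed
  then show "\<exists>H. tree (pg_nodes P2 GG) H \<and> sw_edges P3 GG s = (`) PP ` H" using TH by blast
qed

end


fun ccomp :: "'l ctx \<Rightarrow> 'l ctx \<Rightarrow> 'l ctx" where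
  "ccomp Hole D = D"
| "ccomp (CTensL c u) D = CTensL (ccomp c D) u"
| "ccomp (CTensR u c) D = CTensR u (ccomp c D)"
| "ccomp (CParL c u) D = CParL (ccomp c D) u"
| "ccomp (CParR u c) D = CParR u (ccomp c D)"

lemma fill_ccomp: "fill (ccomp C D) t = fill C (fill D t)"
  by (induction C) auto

theorem lemma1p20:
  fixes P R :: "leaf ctx" and Q :: "leaf tree" and \<Gamma> :: "leaf tree list"
    and x :: lit and i j k :: nat
  assumes "proof_graph
     (fill P (Par (Tens (Leaf (Bot, k)) (fill R (Leaf (x, i))))
                  (Tens (Leaf (dlit x, j)) Q)))
     (Cut (Leaf (x, i)) (Leaf (dlit x, j)) # \<Gamma>)"
  shows "pg_equiv (Cut (Leaf (x, i)) (Leaf (dlit x, j)) # \<Gamma>)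
     (fill P (Par (Tens (Leaf (Bot, k)) (fill R (Leaf (x, i))))
                  (Tens (Leaf (dlit x, j)) Q)))
     (fill P (Tens (Leaf (Bot, k)) (Par (fill R (Leaf (x, i)))
                  (Tens (Leaf (dlit x, j)) Q))))"
proof -
  define Z where "Z = Leaf (Bot, k)"
  define R' where "R' = fill R (Leaf (x, i))"
  define Q' where "Q' = Tens (Leaf (dlit x, j)) Q"
  define G where "G = Cut (Leaf (x, i)) (Leaf (dlit x, j)) # \<Gamma>"
  define P0 where "P0 = fill P (Par (Tens Z R') Q')"
  define P1 where "P1 = fill P (Par (Tens R' Z) Q')"
  define P2 where "P2 = fill P (Par Q' (Tens R' Z))"
  define P3 where "P3 = fill P (Tens (Par Q' R') Z)"
  define P4 where "P4 = fill P (Tens (Par R' Q') Z)"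
  define P5 where "P5 = fill P (Tens Z (Par R' Q'))"
  define C1 where "C1 = ccomp P (CParL Hole Q')"
  define C4 where "C4 = ccomp P (CTensL Hole Z)"
  have f0: "P0 = fill C1 (Tens Z R')" unfolding P0_def C1_def fill_ccomp by simp
  have f1: "P1 = fill C1 (Tens R' Z)" unfolding P1_def C1_def fill_ccomp by simp
  have f3: "P3 = fill C4 (Par Q' R')" unfolding P3_def C4_def fill_ccomp by simp
  have f4: "P4 = fill C4 (Par R' Q')" unfolding P4_def C4_def fill_ccomp by simp
  have pg0: "proof_graph P0 G" using assms unfolding P0_def Z_def R'_def Q'_def G_def .
  have pg1: "proof_graph P1 G" unfolding f1 by (rule swap_tens) (use pg0 f0 in simp)
  have pg2: "proof_graph P2 G" unfolding P2_def by (rule swap_par) (use pg1 P1_def in simp)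
  interpret S: sit P R Q \<Gamma> x i j k
    by unfold_locales (use pg2 in \<open>simp add: P2_def Z_def R'_def Q'_def G_def\<close>)
  have pg3: "proof_graph P3 G" using S.P3_pg unfolding P3_def Z_def R'_def Q'_def G_def .
  have sc: "side_cond P2 G (hpos P) Q' k" using S.side_ok unfolding P2_def Z_def R'_def Q'_def G_def .
  have pg4: "proof_graph P4 G" unfolding f4 by (rule swap_par) (use pg3 f3 in simp)
  have pg5: "proof_graph P5 G" unfolding P5_def by (rule swap_tens) (use pg4 P4_def in simp)
  have s1: "pg_step G P0 P1" unfolding pg_step_def
    using pg0 pg1 f0 f1 unfolding local_rule_def by blast
  have s2: "pg_step G P1 P2" unfolding pg_step_def
    using pg1 pg2 P1_def P2_def unfolding local_rule_def by blast
  have s3: "pg_step G P2 P3" unfolding pg_step_def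
  proof (intro conjI exI)
    show "proof_graph P2 G" "proof_graph P3 G" by (fact pg2, fact pg3)
    show "P2 = fill P (Par Q' (Tens R' (Leaf (Bot, k))))" unfolding P2_def Z_def ..
    show "P3 = fill P (Tens (Par Q' R') (Leaf (Bot, k)))" unfolding P3_def Z_def ..
    show "local_rule P2 G (hpos P) (Par Q' (Tens R' (Leaf (Bot, k)))) (Tens (Par Q' R') (Leaf (Bot, k)))"
      unfolding local_rule_def using sc by blast
  qed
  have s4: "pg_step G P3 P4" unfolding pg_step_def
    using pg3 pg4 f3 f4 unfolding local_rule_def by blast
  have s5: "pg_step G P4 P5" unfolding pg_step_def
    using pg4 pg5 P4_def P5_def unfolding local_rule_def by blast
  let ?r = "\<lambda>X Y. pg_step G X Y \<or> pg_step G Y X"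
  have t1: "?r\<^sup>*\<^sup>* P0 P1" by (rule r_into_rtranclp) (simp add: s1)
  have t2: "?r\<^sup>*\<^sup>* P1 P2" by (rule r_into_rtranclp) (simp add: s2)
  have t3: "?r\<^sup>*\<^sup>* P2 P3" by (rule r_into_rtranclp) (simp add: s3)
  have t4: "?r\<^sup>*\<^sup>* P3 P4" by (rule r_into_rtranclp) (simp add: s4)
  have t5: "?r\<^sup>*\<^sup>* P4 P5" by (rule r_into_rtranclp) (simp add: s5)
  have "?r\<^sup>*\<^sup>* P0 P5"
    using rtranclp_trans[OF rtranclp_trans[OF rtranclp_trans[OF rtranclp_trans[OF t1 t2] t3] t4] t5] .
  then have "pg_equiv G P0 P5" unfolding pg_equiv_def using pg0 by blast
  then show ?thesis unfolding P0_def P5_def Z_def R'_def Q'_def G_def .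
qed


end
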